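(* Let $A$ be an algebra over a field $\Bbbk$. The $A$-bimodule $A$ (with structure map ${}_Am_A=m\circ(m\otimes 1):A\otimes A\otimes A\to A$) is projective in the category ${}_A\mathcal{M}_A$ of $A$-bimodules if and only if $A$ admits a normalized nearly Frobenius coproduct.
   Context: Algebras are associative and unital; tensor products over $\Bbbk$; $m$ denotes multiplication. A nearly Frobenius coproduct on $A$ is a $\Bbbk$-linear map $\Delta:A\to A\otimes A$ with $\Delta\circ m=(1\otimes m)\circ(\Delta\otimes 1)=(m\otimes 1)\circ(1\otimes\Delta)$; it is normalized if $m\circ\Delta=\operatorname{Id}_A$. *)

theory Defs
  imports Complex_Main
begin

definition kalgebra :: "('k::field \<Rightarrow> 'a::ring_1 \<Rightarrow> 'a) \<Rightarrow> bool" where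
  "kalgebra sm \<longleftrightarrow> vector_space sm \<and>
     (\<forall>c a b. sm c (a * b) = sm c a * b \<and> sm c (a * b) = a * sm c b)"

text \<open>An element of the n-fold tensor power of A is represented by a finitely supported
  formal 'k-linear combination of words of length n (a word [a1,...,an] standing for
  a1 (x) ... (x) an); two representatives denote the same tensor iff their difference lies
  in the 'k-span of the multilinearity relations.\<close>

definition tens_carrier :: "nat \<Rightarrow> ('a list \<Rightarrow> 'k::field) set" where
  "tens_carrier n = {f. finite {w. f w \<noteq> 0} \<and> (\<forall>w. f w \<noteq> 0 \<longrightarrow> length w = n)}"

definition delta :: "'a list \<Rightarrow> ('a list \<Rightarrow> 'k::field)" where
  "delta v = (\<lambda>u. if u = v then 1 else 0)"

definition tens_gens :: "('k::field \<Rightarrow> 'a::ring_1 \<Rightarrow> 'a) \<Rightarrow> nat \<Rightarrow> ('a list \<Rightarrow> 'k) set" where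
  "tens_gens sm n =
     {(\<lambda>u. delta (w[j := x + y]) u - delta (w[j := x]) u - delta (w[j := y]) u) | w j x y.
        length w = n \<and> j < n}
   \<union> {(\<lambda>u. delta (w[j := sm c x]) u - c * delta (w[j := x]) u) | w j c x.
        length w = n \<and> j < n}"

inductive_set tens_rel :: "('k::field \<Rightarrow> 'a::ring_1 \<Rightarrow> 'a) \<Rightarrow> nat \<Rightarrow> ('a list \<Rightarrow> 'k) set"
  for sm n where
  zero: "(\<lambda>u. 0) \<in> tens_rel sm n"
| gen: "g \<in> tens_gens sm n \<Longrightarrow> g \<in> tens_rel sm n"
| add: "f \<in> tens_rel sm n \<Longrightarrow> g \<in> tens_rel sm n \<Longrightarrow> (\<lambda>u. f u + g u) \<in> tens_rel sm n"
| scale: "f \<in> tens_rel sm n \<Longrightarrow> (\<lambda>u. c * f u) \<in> tens_rel sm n"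

definition teq :: "('k::field \<Rightarrow> 'a::ring_1 \<Rightarrow> 'a) \<Rightarrow> nat \<Rightarrow> ('a list \<Rightarrow> 'k) \<Rightarrow> ('a list \<Rightarrow> 'k) \<Rightarrow> bool" where
  "teq sm n f g \<longleftrightarrow> (\<lambda>u. f u - g u) \<in> tens_rel sm n"

definition lin_ext :: "('a list \<Rightarrow> ('b list \<Rightarrow> 'k::field)) \<Rightarrow> ('a list \<Rightarrow> 'k) \<Rightarrow> ('b list \<Rightarrow> 'k)" where
  "lin_ext G f = (\<lambda>u. \<Sum>w\<in>{w. f w \<noteq> 0}. f w * G w u)"

text \<open>phi (x) b and a (x) phi for phi a tensor and a, b in A.\<close>
definition rtens :: "('a list \<Rightarrow> 'k::field) \<Rightarrow> 'a \<Rightarrow> ('a list \<Rightarrow> 'k)" where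
  "rtens phi b = (\<lambda>u. if u \<noteq> [] \<and> last u = b then phi (butlast u) else 0)"

definition ltens :: "'a \<Rightarrow> ('a list \<Rightarrow> 'k::field) \<Rightarrow> ('a list \<Rightarrow> 'k)" where
  "ltens a phi = (\<lambda>u. case u of [] \<Rightarrow> 0 | x # r \<Rightarrow> if x = a then phi r else 0)"

definition mult_tens :: "('k::field \<Rightarrow> 'a::ring_1 \<Rightarrow> 'a) \<Rightarrow> ('a list \<Rightarrow> 'k) \<Rightarrow> 'a" where
  "mult_tens sm f = (\<Sum>w\<in>{w. f w \<noteq> 0}. sm (f w) (w ! 0 * w ! 1))"

definition id_m :: "('a::ring_1 list \<Rightarrow> 'k::field) \<Rightarrow> ('a list \<Rightarrow> 'k)" where
  "id_m = lin_ext (\<lambda>w. delta [w ! 0, w ! 1 * w ! 2])"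

definition m_id :: "('a::ring_1 list \<Rightarrow> 'k::field) \<Rightarrow> ('a list \<Rightarrow> 'k)" where
  "m_id = lin_ext (\<lambda>w. delta [w ! 0 * w ! 1, w ! 2])"

definition kLinear_coproduct ::
  "('k::field \<Rightarrow> 'a::ring_1 \<Rightarrow> 'a) \<Rightarrow> ('a \<Rightarrow> ('a list \<Rightarrow> 'k)) \<Rightarrow> bool" where
  "kLinear_coproduct sm D \<longleftrightarrow>
     (\<forall>a. D a \<in> tens_carrier 2) \<and>
     (\<forall>a b. teq sm 2 (D (a + b)) (\<lambda>u. D a u + D b u)) \<and>
     (\<forall>c a. teq sm 2 (D (sm c a)) (\<lambda>u. c * D a u))"

definition nearly_frobenius ::
  "('k::field \<Rightarrow> 'a::ring_1 \<Rightarrow> 'a) \<Rightarrow> ('a \<Rightarrow> ('a list \<Rightarrow> 'k)) \<Rightarrow> bool" where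
  "nearly_frobenius sm D \<longleftrightarrow> kLinear_coproduct sm D \<and>
     (\<forall>f \<in> tens_carrier 2.
        teq sm 2 (lin_ext (\<lambda>w. D (w ! 0 * w ! 1)) f)
                 (id_m (lin_ext (\<lambda>w. rtens (D (w ! 0)) (w ! 1)) f)) \<and>
        teq sm 2 (lin_ext (\<lambda>w. D (w ! 0 * w ! 1)) f)
                 (m_id (lin_ext (\<lambda>w. ltens (w ! 0) (D (w ! 1))) f)))"

definition normalized_nearly_frobenius ::
  "('k::field \<Rightarrow> 'a::ring_1 \<Rightarrow> 'a) \<Rightarrow> ('a \<Rightarrow> ('a list \<Rightarrow> 'k)) \<Rightarrow> bool" where
  "normalized_nearly_frobenius sm D \<longleftrightarrow> nearly_frobenius sm D \<and> (\<forall>a. mult_tens sm (D a) = a)"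

record ('a, 'm) bimod =
  bcarrier :: "'m set"
  badd :: "'m \<Rightarrow> 'm \<Rightarrow> 'm"
  bzero :: 'm
  blact :: "'a \<Rightarrow> 'm \<Rightarrow> 'm"
  bract :: "'m \<Rightarrow> 'a \<Rightarrow> 'm"

text \<open>The 'k-vector space structure is c\<cdot>x = (c\<cdot>1)\<cdot>x,
  so that all structure maps are 'k-linear.\<close>
definition bimodule :: "('k::field \<Rightarrow> 'a::ring_1 \<Rightarrow> 'a) \<Rightarrow> ('a, 'm) bimod \<Rightarrow> bool" where
  "bimodule sm M \<longleftrightarrow>
     (let C = bcarrier M; p = badd M; z = bzero M; l = blact M; r = bract M in
       z \<in> C \<and> (\<forall>x\<in>C. \<forall>y\<in>C. p x y \<in> C) \<and>
       (\<forall>x\<in>C. \<forall>y\<in>C. \<forall>w\<in>C. p (p x y) w = p x (p y w)) \<and>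
       (\<forall>x\<in>C. \<forall>y\<in>C. p x y = p y x) \<and>
       (\<forall>x\<in>C. p z x = x) \<and>
       (\<forall>x\<in>C. \<exists>y\<in>C. p x y = z) \<and>
       (\<forall>a. \<forall>x\<in>C. l a x \<in> C \<and> r x a \<in> C) \<and>
       (\<forall>a. \<forall>x\<in>C. \<forall>y\<in>C. l a (p x y) = p (l a x) (l a y) \<and> r (p x y) a = p (r x a) (r y a)) \<and>
       (\<forall>a b. \<forall>x\<in>C. l (a + b) x = p (l a x) (l b x) \<and> r x (a + b) = p (r x a) (r x b)) \<and>
       (\<forall>a b. \<forall>x\<in>C. l a (l b x) = l (a * b) x \<and> r (r x a) b = r x (a * b)) \<and>
       (\<forall>a b. \<forall>x\<in>C. r (l a x) b = l a (r x b)) \<and>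
       (\<forall>x\<in>C. l 1 x = x \<and> r x 1 = x) \<and>
       (\<forall>c. \<forall>x\<in>C. l (sm c 1) x = r x (sm c 1)))"

definition bimod_hom :: "('a, 'm) bimod \<Rightarrow> ('a, 'n) bimod \<Rightarrow> ('m \<Rightarrow> 'n) \<Rightarrow> bool" where
  "bimod_hom M N f \<longleftrightarrow>
     (\<forall>x\<in>bcarrier M. f x \<in> bcarrier N) \<and>
     (\<forall>x\<in>bcarrier M. \<forall>y\<in>bcarrier M. f (badd M x y) = badd N (f x) (f y)) \<and>
     (\<forall>a. \<forall>x\<in>bcarrier M. f (blact M a x) = blact N a (f x) \<and> f (bract M x a) = bract N (f x) a)"

definition regular_bimod :: "('a::ring_1, 'a) bimod" where
  "regular_bimod = \<lparr>bcarrier = UNIV, badd = (+), bzero = 0, blact = (*), bract = (*)\<rparr>"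

text \<open>Projectivity of the regular bimodule, tested against all bimodule epimorphisms
  g : M \<rightarrow> N with M, N carried by (subsets of) the types 'm and 'n.\<close>
definition projective_regular ::
  "('k::field \<Rightarrow> 'a::ring_1 \<Rightarrow> 'a) \<Rightarrow> 'm itself \<Rightarrow> 'n itself \<Rightarrow> bool" where
  "projective_regular sm _ _ \<longleftrightarrow>
     (\<forall>(M :: ('a, 'm) bimod) (N :: ('a, 'n) bimod) g f.
        bimodule sm M \<and> bimodule sm N \<and> bimod_hom M N g \<and> g ` bcarrier M = bcarrier N \<and>
        bimod_hom regular_bimod N f \<longrightarrow>
        (\<exists>h. bimod_hom regular_bimod M h \<and> (\<forall>a. g (h a) = f a)))"

end

theory Submission
  imports Defs "HOL-Algebra.FiniteProduct"
begin
lemma lin_ext_ext: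
  assumes "finite S" "{w. f w \<noteq> 0} \<subseteq> S"
  shows "lin_ext G f u = (\<Sum>w\<in>S. f w * G w u)"
  unfolding lin_ext_def by (rule sum.mono_neutral_left) (use assms in auto)

lemma fin_supp_add: "finite {w. f w \<noteq> 0} \<Longrightarrow> finite {w. g w \<noteq> 0} \<Longrightarrow> finite {w. (f w::'k::field) + g w \<noteq> 0}"
  by (rule finite_subset[of _ "{w. f w \<noteq> 0} \<union> {w. g w \<noteq> 0}"]) auto

lemma fin_supp_diff: "finite {w. f w \<noteq> 0} \<Longrightarrow> finite {w. g w \<noteq> 0} \<Longrightarrow> finite {w. (f w::'k::field) - g w \<noteq> 0}"
  by (rule finite_subset[of _ "{w. f w \<noteq> 0} \<union> {w. g w \<noteq> 0}"]) auto

lemma fin_supp_scale: "finite {w. f w \<noteq> 0} \<Longrightarrow> finite {w. c * (f w::'k::field) \<noteq> 0}"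
  by (rule finite_subset[of _ "{w. f w \<noteq> 0}"]) auto

lemma fin_supp_sum:
  assumes "finite S" "\<forall>w\<in>S. finite {u. H w u \<noteq> 0}"
  shows "finite {u. (\<Sum>w\<in>S. c w * (H w u::'k::field)) \<noteq> 0}"
proof (rule finite_subset[of _ "\<Union>w\<in>S. {u. H w u \<noteq> 0}"])
  show "{u. (\<Sum>w\<in>S. c w * H w u) \<noteq> 0} \<subseteq> (\<Union>w\<in>S. {u. H w u \<noteq> 0})"
  proof
    fix u assume "u \<in> {u. (\<Sum>w\<in>S. c w * H w u) \<noteq> 0}"
    then obtain w where "w \<in> S" "c w * H w u \<noteq> 0" by (metis (mono_tags, lifting) mem_Collect_eq sum.neutral)
    then show "u \<in> (\<Union>w\<in>S. {u. H w u \<noteq> 0})" by auto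
  qed
qed (use assms in auto)

lemma fin_supp_delta: "finite {u. (delta v u :: 'k::field) \<noteq> 0}"
  by (rule finite_subset[of _ "{v}"]) (auto simp: delta_def)

lemma supp_delta: "{u. (delta v u :: 'k::field) \<noteq> 0} = {v}"
  by (auto simp: delta_def)

lemma lin_ext_add:
  assumes "finite {w. f w \<noteq> 0}" "finite {w. g w \<noteq> 0}"
  shows "lin_ext G (\<lambda>u. f u + g u) = (\<lambda>u. lin_ext G f u + lin_ext G g u)"
proof
  fix u
  let ?S = "{w. f w \<noteq> 0} \<union> {w. g w \<noteq> 0}"
  have "lin_ext G (\<lambda>u. f u + g u) u = (\<Sum>w\<in>?S. (f w + g w) * G w u)"
    by (rule lin_ext_ext) (use assms in auto)
  also have "\<dots> = (\<Sum>w\<in>?S. f w * G w u) + (\<Sum>w\<in>?S. g w * G w u)"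
    by (simp add: distrib_right sum.distrib)
  also have "\<dots> = lin_ext G f u + lin_ext G g u"
    by (subst (1 2) lin_ext_ext[of ?S]) (use assms in auto)
  finally show "lin_ext G (\<lambda>u. f u + g u) u = lin_ext G f u + lin_ext G g u" .
qed

lemma lin_ext_diff:
  assumes "finite {w. f w \<noteq> 0}" "finite {w. g w \<noteq> 0}"
  shows "lin_ext G (\<lambda>u. f u - g u) = (\<lambda>u. lin_ext G f u - lin_ext G g u)"
proof
  fix u
  let ?S = "{w. f w \<noteq> 0} \<union> {w. g w \<noteq> 0}"
  have "lin_ext G (\<lambda>u. f u - g u) u = (\<Sum>w\<in>?S. (f w - g w) * G w u)"
    by (rule lin_ext_ext) (use assms in auto)
  also have "\<dots> = (\<Sum>w\<in>?S. f w * G w u) - (\<Sum>w\<in>?S. g w * G w u)"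
    by (simp add: left_diff_distrib sum_subtractf)
  also have "\<dots> = lin_ext G f u - lin_ext G g u"
    by (subst (1 2) lin_ext_ext[of ?S]) (use assms in auto)
  finally show "lin_ext G (\<lambda>u. f u - g u) u = lin_ext G f u - lin_ext G g u" .
qed

lemma lin_ext_scale:
  assumes "finite {w. f w \<noteq> 0}"
  shows "lin_ext G (\<lambda>u. c * f u) = (\<lambda>u. c * lin_ext G f u)"
proof
  fix u
  have "lin_ext G (\<lambda>u. c * f u) u = (\<Sum>w\<in>{w. f w \<noteq> 0}. (c * f w) * G w u)"
    by (rule lin_ext_ext) (use assms in auto)
  also have "\<dots> = c * lin_ext G f u"
    by (simp add: lin_ext_def sum_distrib_left mult.assoc)
  finally show "lin_ext G (\<lambda>u. c * f u) u = c * lin_ext G f u" .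
qed

lemma lin_ext_zero: "lin_ext G (\<lambda>u. 0) = (\<lambda>u. 0)"
  by (simp add: lin_ext_def)

lemma lin_ext_delta: "lin_ext G (delta v) = G v"
  by (simp add: lin_ext_def supp_delta delta_def)

lemma lin_ext_id:
  assumes "finite {w. f w \<noteq> 0}"
  shows "lin_ext delta f = f"
proof
  fix u
  show "lin_ext delta f u = f u"
  proof (cases "f u = 0")
    case True
    then show ?thesis by (auto simp: lin_ext_def delta_def intro!: sum.neutral)
  next
    case False
    have "lin_ext delta f u = (\<Sum>w\<in>{w. f w \<noteq> 0}. if w = u then f w else 0)"
      unfolding lin_ext_def delta_def by (rule sum.cong) auto
    also have "\<dots> = f u" using False assms by (simp add: sum.delta')
    finally show ?thesis .
  qed
qed

lemma lin_ext_cong: "(\<And>w. f w \<noteq> 0 \<Longrightarrow> G w = G' w) \<Longrightarrow> lin_ext G f = lin_ext G' f"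
  unfolding lin_ext_def by (rule ext, rule sum.cong) auto

lemma lin_ext_sum:
  assumes "finite S" "\<forall>w\<in>S. finite {u. H w u \<noteq> 0}"
  shows "lin_ext G (\<lambda>u. \<Sum>w\<in>S. c w * H w u) = (\<lambda>u. \<Sum>w\<in>S. c w * lin_ext G (H w) u)"
  using assms
proof (induction S rule: finite_induct)
  case empty
  then show ?case by (simp add: lin_ext_zero)
next
  case (insert a S)
  have "lin_ext G (\<lambda>u. \<Sum>w\<in>insert a S. c w * H w u)
      = lin_ext G (\<lambda>u. c a * H a u + (\<Sum>w\<in>S. c w * H w u))"
    using insert by simp
  also have "\<dots> = (\<lambda>u. lin_ext G (\<lambda>u. c a * H a u) u + lin_ext G (\<lambda>u. \<Sum>w\<in>S. c w * H w u) u)"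
    by (rule lin_ext_add) (use insert in \<open>auto intro: fin_supp_scale fin_supp_sum\<close>)
  also have "\<dots> = (\<lambda>u. \<Sum>w\<in>insert a S. c w * lin_ext G (H w) u)"
    using insert by (simp add: lin_ext_scale)
  finally show ?case .
qed

lemma lin_ext_comp:
  assumes "finite {w. f w \<noteq> 0}" "\<And>w. f w \<noteq> 0 \<Longrightarrow> finite {u. H w u \<noteq> 0}"
  shows "lin_ext G (lin_ext H f) = lin_ext (\<lambda>w. lin_ext G (H w)) f"
proof -
  have "lin_ext H f = (\<lambda>u. \<Sum>w\<in>{w. f w \<noteq> 0}. f w * H w u)" by (simp add: lin_ext_def)
  then have "lin_ext G (lin_ext H f) = (\<lambda>u. \<Sum>w\<in>{w. f w \<noteq> 0}. f w * lin_ext G (H w) u)"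
    using lin_ext_sum[of "{w. f w \<noteq> 0}" H G f] assms by simp
  then show ?thesis by (simp add: lin_ext_def)
qed

lemma carrier_fin: "f \<in> tens_carrier n \<Longrightarrow> finite {w. f w \<noteq> 0}"
  by (simp add: tens_carrier_def)

lemma carrier_len: "f \<in> tens_carrier n \<Longrightarrow> f w \<noteq> 0 \<Longrightarrow> length w = n"
  by (simp add: tens_carrier_def)

lemma carrier_add: "f \<in> tens_carrier n \<Longrightarrow> g \<in> tens_carrier n \<Longrightarrow> (\<lambda>u. f u + g u) \<in> tens_carrier n"
  unfolding tens_carrier_def
  apply (intro CollectI conjI allI impI)
  subgoal by (rule fin_supp_add) auto
  subgoal for w by (cases "f w = 0") auto
  done

lemma carrier_diff: "f \<in> tens_carrier n \<Longrightarrow> g \<in> tens_carrier n \<Longrightarrow> (\<lambda>u. f u - g u) \<in> tens_carrier n"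
  unfolding tens_carrier_def
  apply (intro CollectI conjI allI impI)
  subgoal by (rule fin_supp_diff) auto
  subgoal for w by (cases "f w = 0") auto
  done

lemma carrier_scale: "f \<in> tens_carrier n \<Longrightarrow> (\<lambda>u. c * f u) \<in> tens_carrier n"
  unfolding tens_carrier_def
  apply (intro CollectI conjI allI impI)
  subgoal by (rule fin_supp_scale) auto
  subgoal for w by (cases "f w = 0") auto
  done

lemma carrier_zero: "(\<lambda>u. 0) \<in> tens_carrier n"
  unfolding tens_carrier_def by simp

lemma carrier_delta: "length v = n \<Longrightarrow> delta v \<in> tens_carrier n"
  unfolding tens_carrier_def
  apply (intro CollectI conjI allI impI)
  subgoal by (rule fin_supp_delta)
  subgoal for w by (auto simp: delta_def split: if_splits)
  done

lemma carrier_lin_ext: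
  assumes "finite {w. f w \<noteq> 0}" "\<And>w. f w \<noteq> 0 \<Longrightarrow> G w \<in> tens_carrier n"
  shows "lin_ext G f \<in> tens_carrier n"
proof -
  have fin: "finite {u. lin_ext G f u \<noteq> 0}"
    unfolding lin_ext_def by (rule fin_supp_sum) (use assms in \<open>auto dest: carrier_fin\<close>)
  moreover have "length u = n" if "lin_ext G f u \<noteq> 0" for u
  proof -
    from that obtain w where "f w \<noteq> 0" "f w * G w u \<noteq> 0" unfolding lin_ext_def
      by (metis (mono_tags, lifting) mem_Collect_eq sum.neutral)
    then show ?thesis using assms(2) carrier_len by fastforce
  qed
  ultimately show ?thesis by (simp add: tens_carrier_def)
qed

lemma gens_carrier: "g \<in> tens_gens sm n \<Longrightarrow> g \<in> tens_carrier n"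
  unfolding tens_gens_def
  by (auto intro!: carrier_diff carrier_delta carrier_scale)

lemma rel_carrier: "f \<in> tens_rel sm n \<Longrightarrow> f \<in> tens_carrier n"
  by (induction rule: tens_rel.induct) (auto intro: carrier_zero gens_carrier carrier_add carrier_scale)

lemma rel_sub: assumes "f \<in> tens_rel sm n" "g \<in> tens_rel sm n" shows "(\<lambda>u. f u - g u) \<in> tens_rel sm n"
  using tens_rel.add[OF assms(1) tens_rel.scale[OF assms(2), of "-1"]] by simp

lemma rel_sum:
  assumes "finite S" "\<forall>w\<in>S. H w \<in> tens_rel sm n"
  shows "(\<lambda>u. \<Sum>w\<in>S. c w * H w u) \<in> tens_rel sm n"
  using assms
proof (induction S rule: finite_induct)
  case empty
  then show ?case using tens_rel.zero by simp
next
  case (insert a S)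
  then have "(\<lambda>u. (\<lambda>u. c a * H a u) u + (\<lambda>u. \<Sum>w\<in>S. c w * H w u) u) \<in> tens_rel sm n"
    by (intro tens_rel.add tens_rel.scale) auto
  then show ?case using insert by simp
qed

lemma rel_lin_ext:
  assumes "finite {w. f w \<noteq> 0}" "\<And>w. f w \<noteq> 0 \<Longrightarrow> G w \<in> tens_rel sm n"
  shows "lin_ext G f \<in> tens_rel sm n"
  unfolding lin_ext_def by (rule rel_sum) (use assms in auto)

lemma len2E: assumes "length w = 2" obtains p q where "w = [p, q]"
  using assms by (metis One_nat_def Suc_1 length_0_conv length_Suc_conv)

lemma gensI1: "length w = 2 \<Longrightarrow> j < 2 \<Longrightarrow>
  (\<lambda>u. delta (w[j:=x+y]) u - delta (w[j:=x]) u - delta (w[j:=y]) u) \<in> tens_gens sm 2"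
  unfolding tens_gens_def
  apply (rule UnI1, rule CollectI)
  apply (rule_tac x=w in exI, rule_tac x=j in exI, rule_tac x=x in exI, rule_tac x=y in exI)
  by simp

lemma gensI2: "length w = 2 \<Longrightarrow> j < 2 \<Longrightarrow>
  (\<lambda>u. delta (w[j:=sm c x]) u - c * delta (w[j:=x]) u) \<in> tens_gens sm 2"
  unfolding tens_gens_def
  apply (rule UnI2, rule CollectI)
  apply (rule_tac x=w in exI, rule_tac x=j in exI, rule_tac x=c in exI, rule_tac x=x in exI)
  by simp

lemma gen_add0: "(\<lambda>u. delta [x+y, b] u - delta [x,b] u - delta [y,b] u) \<in> tens_rel sm 2"
  using tens_rel.gen[OF gensI1[of "[x,b]" 0 x y]] by simp

lemma gen_add1: "(\<lambda>u. delta [b, x+y] u - delta [b,x] u - delta [b,y] u) \<in> tens_rel sm 2"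
  using tens_rel.gen[OF gensI1[of "[b,x]" 1 x y]] by simp

lemma gen_sc0: "(\<lambda>u. delta [sm c x, b] u - c * delta [x,b] u) \<in> tens_rel sm 2"
  using tens_rel.gen[OF gensI2[of "[x,b]" 0 sm c x]] by simp

lemma gen_sc1: "(\<lambda>u. delta [b, sm c x] u - c * delta [b,x] u) \<in> tens_rel sm 2"
  using tens_rel.gen[OF gensI2[of "[b,x]" 1 sm c x]] by simp

lemma gens2E:
  assumes "g \<in> tens_gens sm 2"
  obtains a x y where "g = (\<lambda>u. delta [x+y,a] u - delta [x,a] u - delta [y,a] u)"
  | a x y where "g = (\<lambda>u. delta [a,x+y] u - delta [a,x] u - delta [a,y] u)"
  | a c x where "g = (\<lambda>u. delta [sm c x, a] u - c * delta [x,a] u)"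
  | a c x where "g = (\<lambda>u. delta [a, sm c x] u - c * delta [a,x] u)"
proof -
  have j: "j < 2 \<Longrightarrow> j = 0 \<or> j = 1" for j :: nat by auto
  from assms consider (A) w j x y where "length w = 2" "j < 2"
      "g = (\<lambda>u. delta (w[j:=x+y]) u - delta (w[j:=x]) u - delta (w[j:=y]) u)"
    | (B) w j c x where "length w = 2" "j < 2" "g = (\<lambda>u. delta (w[j:=sm c x]) u - c * delta (w[j:=x]) u)"
    unfolding tens_gens_def by blast
  then show ?thesis
  proof cases
    case (A w j x y)
    then obtain p q where w: "w = [p,q]" by (auto elim: len2E)
    from j[OF A(2)] show ?thesis
    proof
      assume "j = 0" then show ?thesis using A w that(1)[of x y q] by simp
    next
      assume "j = 1" then show ?thesis using A w that(2)[of p x y] by simp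
    qed
  next
    case (B w j c x)
    then obtain p q where w: "w = [p,q]" by (auto elim: len2E)
    from j[OF B(2)] show ?thesis
    proof
      assume "j = 0" then show ?thesis using B w that(3)[of c x q] by simp
    next
      assume "j = 1" then show ?thesis using B w that(4)[of p c x] by simp
    qed
  qed
qed

lemma teq_refl: "teq sm n f f"
  unfolding teq_def using tens_rel.zero by simp

lemma teq_sym: assumes "teq sm n f g" shows "teq sm n g f"
proof -
  have "(\<lambda>u. -1 * (f u - g u)) \<in> tens_rel sm n" using assms tens_rel.scale unfolding teq_def by blast
  moreover have "(\<lambda>u. -1 * (f u - g u)) = (\<lambda>u. g u - f u)" by (rule ext) simp
  ultimately show ?thesis unfolding teq_def by simp
qed

lemma teq_trans: assumes "teq sm n f g" "teq sm n g h" shows "teq sm n f h"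
proof -
  have "(\<lambda>u. (f u - g u) + (g u - h u)) \<in> tens_rel sm n" using assms tens_rel.add unfolding teq_def by blast
  moreover have "(\<lambda>u. (f u - g u) + (g u - h u)) = (\<lambda>u. f u - h u)" by (rule ext) simp
  ultimately show ?thesis unfolding teq_def by simp
qed

definition grp :: "('a, 'm) bimod \<Rightarrow> 'm monoid" where
  "grp M = \<lparr>carrier = bcarrier M, mult = badd M, one = bzero M\<rparr>"

lemma grp_simps[simp]: "carrier (grp M) = bcarrier M" "mult (grp M) = badd M" "one (grp M) = bzero M"
  by (simp_all add: grp_def)

locale bmod =
  fixes sm :: "'k::field \<Rightarrow> 'a::ring_1 \<Rightarrow> 'a" and M :: "('a, 'm) bimod"
  assumes ka: "kalgebra sm" and bm: "bimodule sm M"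
begin

abbreviation "CC \<equiv> bcarrier M"
abbreviation "pp \<equiv> badd M"
abbreviation "zz \<equiv> bzero M"
abbreviation "ll \<equiv> blact M"
abbreviation "rr \<equiv> bract M"

lemma vs: "vector_space sm" using ka by (simp add: kalgebra_def)
lemma sm_mult1: "sm c (a * b) = sm c a * b" using ka by (simp add: kalgebra_def)
lemma sm_mult2: "sm c (a * b) = a * sm c b" using ka unfolding kalgebra_def by metis
lemma sm_1: "sm c a = sm c 1 * a" using sm_mult1[of c 1 a] by simp
lemma sm_1': "sm c a = a * sm c 1" using sm_mult2[of c a 1] by simp
lemmas VA = vector_space.vector_space_assms[OF vs]
lemma sm_one[simp]: "sm 1 a = a" using VA(4) by blast
lemma sm_addl: "sm (c + d) a = sm c a + sm d a" using VA(2) by blast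
lemma sm_addr: "sm c (a + b) = sm c a + sm c b" using VA(1) by blast
lemma sm_sm: "sm c (sm d a) = sm (c * d) a" using VA(3) by blast
lemma sm_zero[simp]: "sm 0 a = 0" using sm_addl[of 0 0 a] by simp

lemmas B = bm[unfolded bimodule_def Let_def]
lemmas B0 = B[THEN conjunct1]
lemmas B1 = B[THEN conjunct2, THEN conjunct1]
lemmas B2 = B[THEN conjunct2, THEN conjunct2, THEN conjunct1]
lemmas B3 = B[THEN conjunct2, THEN conjunct2, THEN conjunct2, THEN conjunct1]
lemmas B4 = B[THEN conjunct2, THEN conjunct2, THEN conjunct2, THEN conjunct2, THEN conjunct1]
lemmas B5 = B[THEN conjunct2, THEN conjunct2, THEN conjunct2, THEN conjunct2, THEN conjunct2, THEN conjunct1]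
lemmas B6 = B[THEN conjunct2, THEN conjunct2, THEN conjunct2, THEN conjunct2, THEN conjunct2, THEN conjunct2, THEN conjunct1]
lemmas B7 = B[THEN conjunct2, THEN conjunct2, THEN conjunct2, THEN conjunct2, THEN conjunct2, THEN conjunct2, THEN conjunct2, THEN conjunct1]
lemmas B8 = B[THEN conjunct2, THEN conjunct2, THEN conjunct2, THEN conjunct2, THEN conjunct2, THEN conjunct2, THEN conjunct2, THEN conjunct2, THEN conjunct1]
lemmas B9 = B[THEN conjunct2, THEN conjunct2, THEN conjunct2, THEN conjunct2, THEN conjunct2, THEN conjunct2, THEN conjunct2, THEN conjunct2, THEN conjunct2, THEN conjunct1]
lemmas B10 = B[THEN conjunct2, THEN conjunct2, THEN conjunct2, THEN conjunct2, THEN conjunct2, THEN conjunct2, THEN conjunct2, THEN conjunct2, THEN conjunct2, THEN conjunct2, THEN conjunct1]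
lemmas B11 = B[THEN conjunct2, THEN conjunct2, THEN conjunct2, THEN conjunct2, THEN conjunct2, THEN conjunct2, THEN conjunct2, THEN conjunct2, THEN conjunct2, THEN conjunct2, THEN conjunct2, THEN conjunct1]
lemmas B12 = B[THEN conjunct2, THEN conjunct2, THEN conjunct2, THEN conjunct2, THEN conjunct2, THEN conjunct2, THEN conjunct2, THEN conjunct2, THEN conjunct2, THEN conjunct2, THEN conjunct2, THEN conjunct2]

lemma z_C[simp]: "zz \<in> CC" using B0 by auto
lemma p_C[simp]: "u \<in> CC \<Longrightarrow> v \<in> CC \<Longrightarrow> pp u v \<in> CC" using B1 by auto
lemma p_assoc: "u \<in> CC \<Longrightarrow> v \<in> CC \<Longrightarrow> w \<in> CC \<Longrightarrow> pp (pp u v) w = pp u (pp v w)" using B2 by auto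
lemma p_comm: "u \<in> CC \<Longrightarrow> v \<in> CC \<Longrightarrow> pp u v = pp v u" using B3 by auto
lemma p_zero[simp]: "u \<in> CC \<Longrightarrow> pp zz u = u" using B4 by auto
lemma p_zero2[simp]: "u \<in> CC \<Longrightarrow> pp u zz = u" using p_comm[of u zz] by simp
lemma p_inv: "u \<in> CC \<Longrightarrow> \<exists>v\<in>CC. pp u v = zz" using B5 by auto
lemma l_C[simp]: "u \<in> CC \<Longrightarrow> ll a u \<in> CC" using B6 by auto
lemma r_C[simp]: "u \<in> CC \<Longrightarrow> rr u a \<in> CC" using B6 by auto
lemma l_p: "u \<in> CC \<Longrightarrow> v \<in> CC \<Longrightarrow> ll a (pp u v) = pp (ll a u) (ll a v)" using B7 by auto
lemma r_p: "u \<in> CC \<Longrightarrow> v \<in> CC \<Longrightarrow> rr (pp u v) a = pp (rr u a) (rr v a)" using B7 by auto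
lemma l_add: "u \<in> CC \<Longrightarrow> ll (a + b) u = pp (ll a u) (ll b u)" using B8 by auto
lemma r_add: "u \<in> CC \<Longrightarrow> rr u (a + b) = pp (rr u a) (rr u b)" using B8 by auto
lemma l_l: "u \<in> CC \<Longrightarrow> ll a (ll b u) = ll (a * b) u" using B9 by auto
lemma r_r: "u \<in> CC \<Longrightarrow> rr (rr u a) b = rr u (a * b)" using B9 by auto
lemma l_r: "u \<in> CC \<Longrightarrow> rr (ll a u) b = ll a (rr u b)" using B10 by auto
lemma l_one[simp]: "u \<in> CC \<Longrightarrow> ll 1 u = u" using B11 by auto
lemma r_one[simp]: "u \<in> CC \<Longrightarrow> rr u 1 = u" using B11 by auto
lemma l_sm: "u \<in> CC \<Longrightarrow> ll (sm c 1) u = rr u (sm c 1)" using B12 by auto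

lemma cancel: assumes "u \<in> CC" "v \<in> CC" "pp u v = v" shows "u = zz"
proof -
  obtain v' where v': "v' \<in> CC" "pp v v' = zz" using p_inv[OF assms(2)] by blast
  have e: "pp (pp u v) v' = pp u (pp v v')" using p_assoc[OF assms(1,2) v'(1)] .
  then have "pp u zz = zz" using assms(3) v'(2) by simp
  then show ?thesis using assms(1) by simp
qed

lemma l_zz[simp]: "ll a zz = zz"
proof -
  have "ll a zz = pp (ll a zz) (ll a zz)" using l_p[of zz zz a] by simp
  then show ?thesis using cancel[of "ll a zz" "ll a zz"] by simp
qed

lemma r_zz[simp]: "rr zz a = zz"
proof -
  have "rr zz a = pp (rr zz a) (rr zz a)" using r_p[of zz zz a] by simp
  then show ?thesis using cancel[of "rr zz a" "rr zz a"] by simp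
qed

lemma l_0[simp]: "u \<in> CC \<Longrightarrow> ll 0 u = zz"
proof -
  assume u: "u \<in> CC"
  have "ll 0 u = pp (ll 0 u) (ll 0 u)" using l_add[OF u, of 0 0] by simp
  then show ?thesis using cancel[of "ll 0 u" "ll 0 u"] u by simp
qed

lemma cm: "comm_monoid (grp M)"
  apply (rule comm_monoidI)
  subgoal by simp
  subgoal by simp
  subgoal by (simp add: p_assoc)
  subgoal by simp
  subgoal by (simp add: p_comm)
  done

abbreviation "fp F A \<equiv> finprod (grp M) F A"

lemma fp_empty[simp]: "fp F {} = zz"
  using comm_monoid.finprod_empty[OF cm] by simp

lemma fp_insert: "finite A \<Longrightarrow> a \<notin> A \<Longrightarrow> F \<in> insert a A \<rightarrow> CC \<Longrightarrow> fp F (insert a A) = pp (F a) (fp F A)"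
  using comm_monoid.finprod_insert[OF cm, of A a F] by auto

lemma fp_closed[simp]: "F \<in> A \<rightarrow> CC \<Longrightarrow> fp F A \<in> CC"
  using comm_monoid.finprod_closed[OF cm, of F A] by simp

lemma fp_mult: "F \<in> A \<rightarrow> CC \<Longrightarrow> H \<in> A \<rightarrow> CC \<Longrightarrow> fp (\<lambda>w. pp (F w) (H w)) A = pp (fp F A) (fp H A)"
  using comm_monoid.finprod_multf[OF cm, of F A H] by simp

lemma fp_cong: "(\<And>w. w \<in> A \<Longrightarrow> F w = H w) \<Longrightarrow> H \<in> A \<rightarrow> CC \<Longrightarrow> fp F A = fp H A"
  using comm_monoid.finprod_cong'[OF cm, of A A H F] by simp

lemma fp_neutral: "finite B \<Longrightarrow> A \<subseteq> B \<Longrightarrow> (\<And>w. w \<in> B - A \<Longrightarrow> F w = zz) \<Longrightarrow> F \<in> B \<rightarrow> CC \<Longrightarrow> fp F A = fp F B"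
  using comm_monoid.finprod_mono_neutral_cong_left[OF cm, of B A F F] by simp

lemma fp_single: "F a \<in> CC \<Longrightarrow> fp F {a} = F a"
  using fp_insert[of "{}" a F] by simp

lemma fp_l: "F \<in> A \<rightarrow> CC \<Longrightarrow> ll a (fp F A) = fp (\<lambda>w. ll a (F w)) A"
proof (induction A rule: infinite_finite_induct)
  case (infinite A)
  then have "fp F A = zz" "fp (\<lambda>w. ll a (F w)) A = zz" "fp (\<lambda>w. rr (F w) a) A = zz"
    using comm_monoid.finprod_infinite[OF cm] by auto
  then show ?case by simp
next
  case empty then show ?case by simp
next
  case (insert b A)
  then have "F \<in> A \<rightarrow> CC" "F b \<in> CC" by auto
  then show ?case using insert by (simp add: fp_insert l_p Pi_iff)
qed

lemma fp_r: "F \<in> A \<rightarrow> CC \<Longrightarrow> rr (fp F A) a = fp (\<lambda>w. rr (F w) a) A"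
proof (induction A rule: infinite_finite_induct)
  case (infinite A)
  then have "fp F A = zz" "fp (\<lambda>w. ll a (F w)) A = zz" "fp (\<lambda>w. rr (F w) a) A = zz"
    using comm_monoid.finprod_infinite[OF cm] by auto
  then show ?case by simp
next
  case empty then show ?case by simp
next
  case (insert b A)
  then have "F \<in> A \<rightarrow> CC" "F b \<in> CC" by auto
  then show ?case using insert by (simp add: fp_insert r_p Pi_iff)
qed

lemma hom_zz: assumes "bmod sm N" "bimod_hom M N g" shows "g zz = bzero N"
proof -
  have "g zz = badd N (g zz) (g zz)" using assms(2) unfolding bimod_hom_def
    by (metis p_zero z_C)
  moreover have "g zz \<in> bcarrier N" using assms(2) unfolding bimod_hom_def by simp
  ultimately show ?thesis using bmod.cancel[OF assms(1)] by metis
qed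

lemma hom_fp: assumes "bmod sm N" "bimod_hom M N g" "F \<in> A \<rightarrow> CC"
  shows "g (fp F A) = finprod (grp N) (\<lambda>w. g (F w)) A"
  using assms(3)
proof (induction A rule: infinite_finite_induct)
  case (infinite A)
  then have "fp F A = zz" "finprod (grp N) (\<lambda>w. g (F w)) A = bzero N"
    using comm_monoid.finprod_infinite[OF cm] comm_monoid.finprod_infinite[OF bmod.cm[OF assms(1)]] by auto
  then show ?case using hom_zz[OF assms(1,2)] by simp
next
  case empty then show ?case using hom_zz[OF assms(1,2)] by (simp add: comm_monoid.finprod_empty[OF bmod.cm[OF assms(1)]])
next
  case (insert b A)
  then have "F \<in> A \<rightarrow> CC" "F b \<in> CC" by auto
  moreover have "(\<lambda>w. g (F w)) \<in> insert b A \<rightarrow> bcarrier N" using assms(2) insert(4) unfolding bimod_hom_def by auto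
  ultimately show ?case using insert assms(2) bmod.fp_insert[OF assms(1), of A b "\<lambda>w. g (F w)"]
    unfolding bimod_hom_def by (simp add: fp_insert)
qed

end

definition TT :: "('k::field \<Rightarrow> 'a::ring_1 \<Rightarrow> 'a) \<Rightarrow> ('a, 'm) bimod \<Rightarrow> 'm \<Rightarrow> 'k \<Rightarrow> 'a list \<Rightarrow> 'm" where
  "TT sm M x c w = blact M (sm c (w!0)) (bract M x (w!1))"

definition Phi :: "('k::field \<Rightarrow> 'a::ring_1 \<Rightarrow> 'a) \<Rightarrow> ('a, 'm) bimod \<Rightarrow> 'm \<Rightarrow> ('a list \<Rightarrow> 'k) \<Rightarrow> 'm" where
  "Phi sm M x f = finprod (grp M) (\<lambda>w. TT sm M x (f w) w) {w. f w \<noteq> 0}"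

locale bmx = bmod +
  fixes x
  assumes xC: "x \<in> bcarrier M"
begin

abbreviation "T \<equiv> TT sm M x"
abbreviation "\<Phi> \<equiv> Phi sm M x"

lemma T_C[simp]: "T c w \<in> CC" by (simp add: TT_def xC)
lemma T_Pi[simp]: "(\<lambda>w. T (f w) w) \<in> A \<rightarrow> CC" by simp
lemma T_0[simp]: "T 0 w = zz" by (simp add: TT_def xC)
lemma T_add: "T (c + d) w = pp (T c w) (T d w)" by (simp add: TT_def xC sm_addl l_add)
lemma T_mult: "T (c * d) w = ll (sm c 1) (T d w)"
  by (simp add: TT_def xC l_l flip: sm_sm sm_1)

lemma Phi_ext: assumes "finite S" "{w. f w \<noteq> 0} \<subseteq> S" shows "\<Phi> f = fp (\<lambda>w. T (f w) w) S"
  unfolding Phi_def by (rule fp_neutral) (use assms in auto)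

lemma Phi_C[simp]: "\<Phi> f \<in> CC" unfolding Phi_def by simp

lemma Phi_zero: "\<Phi> (\<lambda>u. 0) = zz" unfolding Phi_def by simp

lemma Phi_add: assumes "finite {w. f w \<noteq> 0}" "finite {w. g w \<noteq> 0}"
  shows "\<Phi> (\<lambda>u. f u + g u) = pp (\<Phi> f) (\<Phi> g)"
proof -
  let ?S = "{w. f w \<noteq> 0} \<union> {w. g w \<noteq> 0}"
  have "\<Phi> (\<lambda>u. f u + g u) = fp (\<lambda>w. T (f w + g w) w) ?S" by (rule Phi_ext) (use assms in auto)
  also have "\<dots> = fp (\<lambda>w. pp (T (f w) w) (T (g w) w)) ?S" by (simp add: T_add)
  also have "\<dots> = pp (fp (\<lambda>w. T (f w) w) ?S) (fp (\<lambda>w. T (g w) w) ?S)" by (rule fp_mult) auto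
  also have "\<dots> = pp (\<Phi> f) (\<Phi> g)" using Phi_ext[of ?S f] Phi_ext[of ?S g] assms by auto
  finally show ?thesis .
qed

lemma Phi_scale: assumes "finite {w. f w \<noteq> 0}"
  shows "\<Phi> (\<lambda>u. c * f u) = ll (sm c 1) (\<Phi> f)"
proof -
  have "\<Phi> (\<lambda>u. c * f u) = fp (\<lambda>w. T (c * f w) w) {w. f w \<noteq> 0}" by (rule Phi_ext) (use assms in auto)
  also have "\<dots> = fp (\<lambda>w. ll (sm c 1) (T (f w) w)) {w. f w \<noteq> 0}" by (simp add: T_mult)
  also have "\<dots> = ll (sm c 1) (\<Phi> f)" unfolding Phi_def by (rule fp_l[symmetric]) simp
  finally show ?thesis .
qed

lemma Phi_delta_sc: "\<Phi> (\<lambda>u. c * delta v u) = T c v"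
proof -
  have "\<Phi> (\<lambda>u. c * delta v u) = fp (\<lambda>w. T (c * delta v w) w) {v}" by (rule Phi_ext) (auto simp: delta_def)
  also have "\<dots> = T c v" by (subst fp_single) (auto simp: delta_def)
  finally show ?thesis .
qed

lemma Phi_delta: "\<Phi> (delta v) = T 1 v"
  using Phi_delta_sc[of 1 v] by simp

lemma Phi_kill:
  assumes "finite {w. g w \<noteq> 0}" "finite {w. h w \<noteq> 0}" "(\<lambda>u. g u + h u) = k" "\<Phi> k = \<Phi> h"
  shows "\<Phi> g = zz"
proof -
  have "pp (\<Phi> g) (\<Phi> h) = \<Phi> h" using Phi_add[OF assms(1,2), symmetric] unfolding assms(3) assms(4) .
  then show ?thesis using cancel[of "\<Phi> g" "\<Phi> h"] by simp
qed

lemma fd: "finite {u. delta v u \<noteq> 0}" by (rule fin_supp_delta)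

lemma Phi_gen: assumes "g \<in> tens_gens sm 2" shows "\<Phi> g = zz"
proof -
  have fg: "finite {w. g w \<noteq> 0}" using gens_carrier[OF assms] carrier_fin by blast
  from assms show ?thesis
  proof (cases rule: gens2E)
    case (1 a x' y')
    show ?thesis
      apply (rule Phi_kill[OF fg, of "\<lambda>u. delta [x',a] u + delta [y',a] u" "delta [x'+y',a]"])
      subgoal by (intro fin_supp_add fd)
      subgoal using 1 by auto
      subgoal by (simp add: Phi_add fd Phi_delta TT_def xC l_add)
      done
  next
    case (2 a x' y')
    show ?thesis
      apply (rule Phi_kill[OF fg, of "\<lambda>u. delta [a,x'] u + delta [a,y'] u" "delta [a,x'+y']"])
      subgoal by (intro fin_supp_add fd)
      subgoal using 2 by auto
      subgoal by (simp add: Phi_add fd Phi_delta TT_def xC r_add l_p)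
      done
  next
    case (3 a c x')
    show ?thesis
      apply (rule Phi_kill[OF fg, of "\<lambda>u. c * delta [x',a] u" "delta [sm c x',a]"])
      subgoal by (intro fin_supp_scale fd)
      subgoal using 3 by auto
      subgoal by (simp add: Phi_delta_sc Phi_delta TT_def)
      done
  next
    case (4 a c x')
    have key: "ll a (rr x (sm c x')) = ll (sm c a) (rr x x')"
    proof -
      have "rr x (sm c x') = rr (rr x (sm c 1)) x'" using r_r[OF xC] sm_1 by metis
      also have "\<dots> = ll (sm c 1) (rr x x')" using l_sm[OF xC] l_r[OF xC] by metis
      finally have "ll a (rr x (sm c x')) = ll a (ll (sm c 1) (rr x x'))" by simp
      also have "\<dots> = ll (sm c a) (rr x x')" using l_l[of "rr x x'" a "sm c 1"] sm_1'[of c a] xC by simp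
      finally show ?thesis .
    qed
    show ?thesis
      apply (rule Phi_kill[OF fg, of "\<lambda>u. c * delta [a,x'] u" "delta [a,sm c x']"])
      subgoal by (intro fin_supp_scale fd)
      subgoal using 4 by auto
      subgoal using key by (simp add: Phi_delta_sc Phi_delta TT_def)
      done
  qed
qed

lemma Phi_rel: "f \<in> tens_rel sm 2 \<Longrightarrow> \<Phi> f = zz"
proof (induction rule: tens_rel.induct)
  case zero
  then show ?case by (rule Phi_zero)
next
  case (gen g)
  then show ?case by (rule Phi_gen)
next
  case (add f g)
  have "finite {w. f w \<noteq> 0}" "finite {w. g w \<noteq> 0}"
    using carrier_fin[OF rel_carrier[OF add(1)]] carrier_fin[OF rel_carrier[OF add(2)]] by auto
  then show ?case using add by (simp add: Phi_add)
next
  case (scale f c)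
  have "finite {w. f w \<noteq> 0}" using carrier_fin[OF rel_carrier[OF scale(1)]] by auto
  then show ?case using scale by (simp add: Phi_scale)
qed

lemma Phi_teq: assumes "f \<in> tens_carrier 2" "g \<in> tens_carrier 2" "teq sm 2 f g"
  shows "\<Phi> f = \<Phi> g"
proof -
  have r: "(\<lambda>u. f u - g u) \<in> tens_rel sm 2" using assms(3) by (simp add: teq_def)
  have "f = (\<lambda>u. g u + (f u - g u))" by simp
  then have "\<Phi> f = pp (\<Phi> g) (\<Phi> (\<lambda>u. f u - g u))"
    using Phi_add[of g "\<lambda>u. f u - g u"] carrier_fin[OF assms(2)] carrier_fin[OF rel_carrier[OF r]] by metis
  then show ?thesis using Phi_rel[OF r] by simp
qed

lemma Phi_lin: assumes "finite S"
  shows "\<Phi> (\<lambda>u. \<Sum>r\<in>S. c r * delta (F r) u) = fp (\<lambda>r. T (c r) (F r)) S"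
  using assms
proof (induction S rule: finite_induct)
  case empty
  then show ?case by (simp add: Phi_zero)
next
  case (insert a S)
  have fs: "finite {u. (\<Sum>r\<in>S. c r * delta (F r) u) \<noteq> 0}"
    by (rule fin_supp_sum) (use insert fd in auto)
  have "\<Phi> (\<lambda>u. \<Sum>r\<in>insert a S. c r * delta (F r) u) = \<Phi> (\<lambda>u. c a * delta (F a) u + (\<Sum>r\<in>S. c r * delta (F r) u))"
    using insert by simp
  also have "\<dots> = pp (T (c a) (F a)) (\<Phi> (\<lambda>u. \<Sum>r\<in>S. c r * delta (F r) u))"
    using Phi_add[OF fin_supp_scale[OF fd] fs] by (simp add: Phi_delta_sc)
  also have "\<dots> = fp (\<lambda>r. T (c r) (F r)) (insert a S)"
    using insert by (simp add: fp_insert)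
  finally show ?case .
qed

lemma Phi_L: assumes "finite {w. f w \<noteq> 0}"
  shows "\<Phi> (lin_ext (\<lambda>w. delta [a * w!0, w!1]) f) = ll a (\<Phi> f)"
proof -
  have "\<Phi> (lin_ext (\<lambda>w. delta [a * w!0, w!1]) f) = fp (\<lambda>r. T (f r) [a * r!0, r!1]) {w. f w \<noteq> 0}"
    unfolding lin_ext_def by (rule Phi_lin[OF assms])
  also have "\<dots> = fp (\<lambda>r. ll a (T (f r) r)) {w. f w \<noteq> 0}"
    by (simp add: TT_def xC l_l sm_mult2)
  also have "\<dots> = ll a (\<Phi> f)" unfolding Phi_def by (rule fp_l[symmetric]) simp
  finally show ?thesis .
qed

lemma Phi_R: assumes "finite {w. f w \<noteq> 0}"
  shows "\<Phi> (lin_ext (\<lambda>w. delta [w!0, w!1 * b]) f) = rr (\<Phi> f) b"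
proof -
  have "\<Phi> (lin_ext (\<lambda>w. delta [w!0, w!1 * b]) f) = fp (\<lambda>r. T (f r) [r!0, r!1 * b]) {w. f w \<noteq> 0}"
    unfolding lin_ext_def by (rule Phi_lin[OF assms])
  also have "\<dots> = fp (\<lambda>r. rr (T (f r) r) b) {w. f w \<noteq> 0}"
    by (simp add: TT_def xC l_r flip: r_r)
  also have "\<dots> = rr (\<Phi> f) b" unfolding Phi_def by (rule fp_r[symmetric]) simp
  finally show ?thesis .
qed

end

lemma reg_bimod: fixes sm :: "'k::field \<Rightarrow> 'a::ring_1 \<Rightarrow> 'a" assumes "kalgebra sm" shows "bimodule sm (regular_bimod :: ('a::ring_1, 'a) bimod)"
proof -
  have "sm c 1 * x = x * sm c 1" for c and x :: 'a
    using assms unfolding kalgebra_def by (metis mult_1_left mult_1_right)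
  then show ?thesis
    unfolding bimodule_def regular_bimod_def Let_def
    by (auto simp: algebra_simps intro: exI[of _ "- _"])
qed

lemma fp_reg: fixes sm :: "'k::field \<Rightarrow> 'a::ring_1 \<Rightarrow> 'a" assumes "kalgebra sm" and "finite A"
  shows "finprod (grp (regular_bimod :: ('a::ring_1, 'a) bimod)) F A = sum F A"
proof -
  interpret R: bmod sm "regular_bimod :: ('a, 'a) bimod" by (rule bmod.intro[OF assms(1) reg_bimod[OF assms(1)]])
  show ?thesis using assms(2)
  proof (induction A rule: finite_induct)
    case empty then show ?case using R.fp_empty[of F] by (simp add: regular_bimod_def)
  next
    case (insert a A)
    then show ?case using R.fp_insert[of A a F] by (simp add: regular_bimod_def)
  qed
qed

lemma mult_tens_Phi: fixes sm :: "'k::field \<Rightarrow> 'a::ring_1 \<Rightarrow> 'a" assumes "kalgebra sm" "finite {w. f w \<noteq> 0}"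
  shows "mult_tens sm f = Phi sm (regular_bimod :: ('a::ring_1, 'a) bimod) 1 f"
proof -
  have "Phi sm (regular_bimod :: ('a::ring_1, 'a) bimod) 1 f = (\<Sum>w\<in>{w. f w \<noteq> 0}. sm (f w) (w!0) * (1 * w!1))"
    unfolding Phi_def using fp_reg[OF assms(1) assms(2)] by (simp add: TT_def regular_bimod_def)
  also have "\<dots> = mult_tens sm f"
    unfolding mult_tens_def using assms(1) by (simp add: kalgebra_def)
  finally show ?thesis by simp
qed

lemma supp_rtens: "{w. rtens phi b w \<noteq> 0} = (\<lambda>r. r @ [b]) ` {r. phi r \<noteq> 0}"
proof
  show "{w. rtens phi b w \<noteq> 0} \<subseteq> (\<lambda>r. r @ [b]) ` {r. phi r \<noteq> 0}"
  proof
    fix w assume "w \<in> {w. rtens phi b w \<noteq> 0}"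
    then have w: "w \<noteq> []" "last w = b" "phi (butlast w) \<noteq> 0" by (auto simp: rtens_def split: if_splits)
    then have "w = butlast w @ [b]" by (metis append_butlast_last_id)
    then show "w \<in> (\<lambda>r. r @ [b]) ` {r. phi r \<noteq> 0}" using w by blast
  qed
  show "(\<lambda>r. r @ [b]) ` {r. phi r \<noteq> 0} \<subseteq> {w. rtens phi b w \<noteq> 0}"
    by (auto simp: rtens_def)
qed

lemma supp_ltens: "{w. ltens a phi w \<noteq> 0} = (\<lambda>r. a # r) ` {r. phi r \<noteq> 0}"
proof
  show "{w. ltens a phi w \<noteq> 0} \<subseteq> (\<lambda>r. a # r) ` {r. phi r \<noteq> 0}"
  proof
    fix w assume "w \<in> {w. ltens a phi w \<noteq> 0}"
    then show "w \<in> (\<lambda>r. a # r) ` {r. phi r \<noteq> 0}"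
      by (cases w) (auto simp: ltens_def split: if_splits)
  qed
  show "(\<lambda>r. a # r) ` {r. phi r \<noteq> 0} \<subseteq> {w. ltens a phi w \<noteq> 0}"
    by (auto simp: ltens_def)
qed

lemma id_m_rtens: assumes "phi \<in> tens_carrier 2"
  shows "id_m (rtens phi b) = lin_ext (\<lambda>w. delta [w!0, w!1 * b]) phi"
proof -
  have "id_m (rtens phi b) = (\<lambda>u. \<Sum>w\<in>(\<lambda>r. r @ [b]) ` {r. phi r \<noteq> 0}. rtens phi b w * delta [w!0, w!1 * w!2] u)"
    unfolding id_m_def lin_ext_def supp_rtens ..
  also have "\<dots> = (\<lambda>u. \<Sum>r\<in>{r. phi r \<noteq> 0}. rtens phi b (r @ [b]) * delta [(r @ [b])!0, (r @ [b])!1 * (r @ [b])!2] u)"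
    by (rule ext, subst sum.reindex) (auto simp: inj_on_def)
  also have "\<dots> = (\<lambda>u. \<Sum>r\<in>{r. phi r \<noteq> 0}. phi r * delta [r!0, r!1 * b] u)"
  proof (rule ext, rule sum.cong)
    fix u r assume "r \<in> {r. phi r \<noteq> 0}"
    then have "length r = 2" using carrier_len[OF assms] by auto
    then obtain p q where "r = [p, q]" by (rule len2E)
    then show "rtens phi b (r @ [b]) * delta [(r @ [b])!0, (r @ [b])!1 * (r @ [b])!2] u = phi r * delta [r!0, r!1 * b] u"
      by (simp add: rtens_def)
  qed simp
  also have "\<dots> = lin_ext (\<lambda>w. delta [w!0, w!1 * b]) phi" by (simp add: lin_ext_def)
  finally show ?thesis .
qed

lemma m_id_ltens: "m_id (ltens a phi) = lin_ext (\<lambda>w. delta [a * w!0, w!1]) phi"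
proof -
  have "m_id (ltens a phi) = (\<lambda>u. \<Sum>w\<in>(\<lambda>r. a # r) ` {r. phi r \<noteq> 0}. ltens a phi w * delta [w!0 * w!1, w!2] u)"
    unfolding m_id_def lin_ext_def supp_ltens ..
  also have "\<dots> = (\<lambda>u. \<Sum>r\<in>{r. phi r \<noteq> 0}. ltens a phi (a # r) * delta [(a # r)!0 * (a # r)!1, (a # r)!2] u)"
    by (rule ext, subst sum.reindex) (auto simp: inj_on_def)
  also have "\<dots> = lin_ext (\<lambda>w. delta [a * w!0, w!1]) phi"
    by (simp add: lin_ext_def ltens_def numeral_2_eq_2)
  finally show ?thesis .
qed

lemma L_carrier: "phi \<in> tens_carrier 2 \<Longrightarrow> lin_ext (\<lambda>w. delta [a * w!0, w!1]) phi \<in> tens_carrier 2"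
  by (rule carrier_lin_ext) (auto dest: carrier_fin intro: carrier_delta)

lemma R_carrier: "phi \<in> tens_carrier 2 \<Longrightarrow> lin_ext (\<lambda>w. delta [w!0, w!1 * b]) phi \<in> tens_carrier 2"
  by (rule carrier_lin_ext) (auto dest: carrier_fin intro: carrier_delta)

lemma delta2_carrier: "delta [a, b] \<in> tens_carrier 2"
  by (rule carrier_delta) simp

lemma NF_facts:
  assumes "normalized_nearly_frobenius sm D"
  shows "D a \<in> tens_carrier 2"
    and "teq sm 2 (D (a + b)) (\<lambda>u. D a u + D b u)"
    and "teq sm 2 (D (sm c a)) (\<lambda>u. c * D a u)"
    and "teq sm 2 (D (a * b)) (lin_ext (\<lambda>w. delta [w!0, w!1 * b]) (D a))"
    and "teq sm 2 (D (a * b)) (lin_ext (\<lambda>w. delta [a * w!0, w!1]) (D b))"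
    and "mult_tens sm (D a) = a"
proof -
  have K: "kLinear_coproduct sm D" and N: "\<forall>f \<in> tens_carrier 2.
        teq sm 2 (lin_ext (\<lambda>w. D (w ! 0 * w ! 1)) f)
                 (id_m (lin_ext (\<lambda>w. rtens (D (w ! 0)) (w ! 1)) f)) \<and>
        teq sm 2 (lin_ext (\<lambda>w. D (w ! 0 * w ! 1)) f)
                 (m_id (lin_ext (\<lambda>w. ltens (w ! 0) (D (w ! 1))) f))"
    and "\<forall>a. mult_tens sm (D a) = a"
    using assms unfolding normalized_nearly_frobenius_def nearly_frobenius_def by auto
  then show "mult_tens sm (D a) = a" by simp
  show "D a \<in> tens_carrier 2" "teq sm 2 (D (a + b)) (\<lambda>u. D a u + D b u)"
    "teq sm 2 (D (sm c a)) (\<lambda>u. c * D a u)" using K unfolding kLinear_coproduct_def by auto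
  have Dc: "D a \<in> tens_carrier 2" for a using K unfolding kLinear_coproduct_def by auto
  from N delta2_carrier[of a b] have N1: "teq sm 2 (D (a * b)) (id_m (rtens (D a) b))"
    and N2: "teq sm 2 (D (a * b)) (m_id (ltens a (D b)))"
    by (auto simp: lin_ext_delta)
  show "teq sm 2 (D (a * b)) (lin_ext (\<lambda>w. delta [w!0, w!1 * b]) (D a))"
    using N1 id_m_rtens[OF Dc] by simp
  show "teq sm 2 (D (a * b)) (lin_ext (\<lambda>w. delta [a * w!0, w!1]) (D b))"
    using N2 m_id_ltens[of a "D b"] by simp
qed

lemma dir2:
  fixes sm :: "'k::field \<Rightarrow> 'a::ring_1 \<Rightarrow> 'a"
  assumes ka: "kalgebra sm" and nf: "normalized_nearly_frobenius sm D"
  shows "projective_regular sm TYPE('m) TYPE('n)"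
  unfolding projective_regular_def
proof (intro allI impI, elim conjE)
  fix M :: "('a, 'm) bimod" and N :: "('a, 'n) bimod" and g f
  assume bM: "bimodule sm M" and bN: "bimodule sm N" and gh: "bimod_hom M N g"
    and gs: "g ` bcarrier M = bcarrier N" and fh: "bimod_hom regular_bimod N f"
  interpret MM: bmod sm M by (rule bmod.intro[OF ka bM])
  interpret NN: bmod sm N by (rule bmod.intro[OF ka bN])
  interpret RR: bmod sm "regular_bimod :: ('a, 'a) bimod" by (rule bmod.intro[OF ka reg_bimod[OF ka]])
  have f1: "f 1 \<in> bcarrier N" using fh unfolding bimod_hom_def regular_bimod_def by simp
  then obtain x where xC: "x \<in> bcarrier M" and gx: "g x = f 1" using gs by force
  interpret X: bmx sm M x by (rule bmx.intro[OF bmod.intro[OF ka bM]]) (rule bmx_axioms.intro[OF xC])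
  interpret R1: bmx sm "regular_bimod :: ('a, 'a) bimod" 1
    by (rule bmx.intro[OF bmod.intro[OF ka reg_bimod[OF ka]]]) (rule bmx_axioms.intro, simp add: regular_bimod_def)
  have Dc: "\<And>a. D a \<in> tens_carrier 2" using NF_facts(1)[OF nf] .
  define h where "h a = X.\<Phi> (D a)" for a
  have hadd: "h (a + b) = badd M (h a) (h b)" for a b
  proof -
    have "h (a + b) = X.\<Phi> (\<lambda>u. D a u + D b u)" unfolding h_def
      by (rule X.Phi_teq[OF Dc carrier_add[OF Dc Dc] NF_facts(2)[OF nf]])
    also have "\<dots> = badd M (h a) (h b)" unfolding h_def by (rule X.Phi_add) (use Dc carrier_fin in auto)
    finally show ?thesis .
  qed
  have hl: "h (a * b) = blact M a (h b)" for a b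
  proof -
    have "h (a * b) = X.\<Phi> (lin_ext (\<lambda>w. delta [a * w!0, w!1]) (D b))" unfolding h_def
      by (rule X.Phi_teq[OF Dc L_carrier[OF Dc] NF_facts(5)[OF nf]])
    also have "\<dots> = blact M a (h b)" unfolding h_def by (rule X.Phi_L) (use Dc carrier_fin in auto)
    finally show ?thesis .
  qed
  have hr: "h (a * b) = bract M (h a) b" for a b
  proof -
    have "h (a * b) = X.\<Phi> (lin_ext (\<lambda>w. delta [w!0, w!1 * b]) (D a))" unfolding h_def
      by (rule X.Phi_teq[OF Dc R_carrier[OF Dc] NF_facts(4)[OF nf]])
    also have "\<dots> = bract M (h a) b" unfolding h_def by (rule X.Phi_R) (use Dc carrier_fin in auto)
    finally show ?thesis .
  qed
  have hhom: "bimod_hom regular_bimod M h"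
    unfolding bimod_hom_def regular_bimod_def using hadd hl hr by (simp add: h_def)
  have gT: "g (TT sm M x c w) = f (TT sm regular_bimod 1 c w)" for c w
  proof -
    have "g (TT sm M x c w) = blact N (sm c (w!0)) (bract N (g x) (w!1))"
      using gh xC unfolding bimod_hom_def TT_def by simp
    also have "\<dots> = blact N (sm c (w!0)) (f (1 * w!1))"
    proof -
      have "\<forall>a x. f (x * a) = bract N (f x) a" using fh unfolding bimod_hom_def regular_bimod_def by (simp only: bimod.select_convs) blast
      then have "f (1 * w!1) = bract N (f 1) (w!1)" by blast
      then show ?thesis using gx by simp
    qed
    also have "\<dots> = f (sm c (w!0) * (1 * w!1))"
      using fh unfolding bimod_hom_def regular_bimod_def by simp
    also have "\<dots> = f (TT sm regular_bimod 1 c w)" by (simp add: TT_def regular_bimod_def)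
    finally show ?thesis .
  qed
  have "g (h a) = f a" for a
  proof -
    let ?S = "{w. D a w \<noteq> 0}"
    have "g (h a) = finprod (grp N) (\<lambda>w. g (TT sm M x (D a w) w)) ?S"
      unfolding h_def Phi_def by (rule MM.hom_fp[OF NN.bmod_axioms gh]) simp
    also have "\<dots> = finprod (grp N) (\<lambda>w. f (TT sm regular_bimod 1 (D a w) w)) ?S"
      by (simp add: gT)
    also have "\<dots> = f (R1.\<Phi> (D a))"
      unfolding Phi_def by (rule RR.hom_fp[OF NN.bmod_axioms fh, symmetric]) (simp add: regular_bimod_def)
    also have "\<dots> = f (mult_tens sm (D a))"
      using mult_tens_Phi[OF ka carrier_fin[OF Dc]] by simp
    also have "\<dots> = f a" using NF_facts(6)[OF nf] by simp
    finally show ?thesis .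
  qed
  then show "\<exists>h. bimod_hom regular_bimod M h \<and> (\<forall>a. g (h a) = f a)" using hhom by blast
qed

definition cls :: "('k::field \<Rightarrow> 'a::ring_1 \<Rightarrow> 'a) \<Rightarrow> ('a list \<Rightarrow> 'k) \<Rightarrow> ('a list \<Rightarrow> 'k) set" where
  "cls sm f = {g \<in> tens_carrier 2. teq sm 2 g f}"

definition rep :: "('a list \<Rightarrow> 'k) set \<Rightarrow> ('a list \<Rightarrow> 'k)" where
  "rep X = (SOME f. f \<in> X)"

definition Lop :: "'a::ring_1 \<Rightarrow> ('a list \<Rightarrow> 'k::field) \<Rightarrow> ('a list \<Rightarrow> 'k)" where
  "Lop a f = lin_ext (\<lambda>w. delta [a * w!0, w!1]) f"

definition Rop :: "'a::ring_1 \<Rightarrow> ('a list \<Rightarrow> 'k::field) \<Rightarrow> ('a list \<Rightarrow> 'k)" where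
  "Rop b f = lin_ext (\<lambda>w. delta [w!0, w!1 * b]) f"

definition QM :: "('k::field \<Rightarrow> 'a::ring_1 \<Rightarrow> 'a) \<Rightarrow> ('a, ('a list \<Rightarrow> 'k) set) bimod" where
  "QM sm = \<lparr>bcarrier = cls sm ` tens_carrier 2,
            badd = (\<lambda>X Y. cls sm (\<lambda>u. rep X u + rep Y u)),
            bzero = cls sm (\<lambda>u. 0),
            blact = (\<lambda>a X. cls sm (Lop a (rep X))),
            bract = (\<lambda>X b. cls sm (Rop b (rep X)))\<rparr>"

lemma teq_add: "teq sm n f f' \<Longrightarrow> teq sm n g g' \<Longrightarrow> teq sm n (\<lambda>u. f u + g u) (\<lambda>u. f' u + g' u)"
proof -
  assume a: "teq sm n f f'" "teq sm n g g'"
  then have "(\<lambda>u. (f u - f' u) + (g u - g' u)) \<in> tens_rel sm n" unfolding teq_def by (rule tens_rel.add)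
  moreover have "(\<lambda>u. (f u - f' u) + (g u - g' u)) = (\<lambda>u. (f u + g u) - (f' u + g' u))" by (rule ext) simp
  ultimately show ?thesis unfolding teq_def by simp
qed

lemma lin_ext_Gdiff: "(\<lambda>u. lin_ext G f u - lin_ext H f u) = lin_ext (\<lambda>w u. G w u - H w u) f"
  unfolding lin_ext_def by (rule ext) (simp add: right_diff_distrib sum_subtractf)

lemma lin_ext_Gscale: "(\<lambda>u. c * lin_ext G f u) = lin_ext (\<lambda>w u. c * G w u) f"
  unfolding lin_ext_def by (rule ext) (simp add: sum_distrib_left algebra_simps)

lemma lin_ext_teq: assumes "finite {w. f w \<noteq> 0}" "\<And>w. f w \<noteq> 0 \<Longrightarrow> teq sm n (G w) (H w)"
  shows "teq sm n (lin_ext G f) (lin_ext H f)"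
  unfolding teq_def lin_ext_Gdiff by (rule rel_lin_ext) (use assms in \<open>auto simp: teq_def\<close>)

lemma lin_ext_gen1:
  "lin_ext G (\<lambda>u. delta p u - delta q u - delta r u) = (\<lambda>u. G p u - G q u - G r u)"
proof -
  have "lin_ext G (\<lambda>u. (\<lambda>u. delta p u - delta q u) u - delta r u) = (\<lambda>u. lin_ext G (\<lambda>u. delta p u - delta q u) u - lin_ext G (delta r) u)"
    by (rule lin_ext_diff) (intro fin_supp_diff fin_supp_delta)+
  also have "\<dots> = (\<lambda>u. G p u - G q u - G r u)"
    by (subst lin_ext_diff) (auto intro: fin_supp_delta simp: lin_ext_delta)
  finally show ?thesis by simp
qed

lemma lin_ext_gen2:
  "lin_ext G (\<lambda>u. delta p u - c * delta q u) = (\<lambda>u. G p u - c * G q u)"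
proof -
  have "lin_ext G (\<lambda>u. delta p u - (\<lambda>u. c * delta q u) u) = (\<lambda>u. lin_ext G (delta p) u - lin_ext G (\<lambda>u. c * delta q u) u)"
    by (rule lin_ext_diff) (auto intro: fin_supp_scale fin_supp_delta)
  also have "\<dots> = (\<lambda>u. G p u - c * G q u)"
    by (subst lin_ext_scale) (auto intro: fin_supp_delta simp: lin_ext_delta)
  finally show ?thesis by simp
qed

lemma lin_ext_rel_pres:
  assumes gens: "\<And>g. g \<in> tens_gens sm 2 \<Longrightarrow> lin_ext G g \<in> tens_rel sm 2"
  shows "f \<in> tens_rel sm 2 \<Longrightarrow> lin_ext G f \<in> tens_rel sm 2"
proof (induction rule: tens_rel.induct)
  case zero
  then show ?case by (simp add: lin_ext_zero tens_rel.zero)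
next
  case (gen g)
  then show ?case by (rule gens)
next
  case (add f g)
  have "finite {w. f w \<noteq> 0}" "finite {w. g w \<noteq> 0}"
    using carrier_fin[OF rel_carrier[OF add(1)]] carrier_fin[OF rel_carrier[OF add(2)]] by auto
  then show ?case using add by (simp add: lin_ext_add tens_rel.add)
next
  case (scale f c)
  have "finite {w. f w \<noteq> 0}" using carrier_fin[OF rel_carrier[OF scale(1)]] by auto
  then show ?case using scale by (simp add: lin_ext_scale tens_rel.scale)
qed

locale qm =
  fixes sm :: "'k::field \<Rightarrow> 'a::ring_1 \<Rightarrow> 'a"
  assumes ka: "kalgebra sm"
begin

lemma sm_mult1: "sm c (a * b) = sm c a * b" using ka by (simp add: kalgebra_def)
lemma sm_mult2: "sm c (a * b) = a * sm c b" using ka unfolding kalgebra_def by metis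

abbreviation "V \<equiv> tens_carrier 2 :: ('a list \<Rightarrow> 'k) set"

lemma Lop_rel: "f \<in> tens_rel sm 2 \<Longrightarrow> Lop a f \<in> tens_rel sm 2"
  unfolding Lop_def
proof (rule lin_ext_rel_pres)
  fix g assume "g \<in> tens_gens sm 2"
  then show "lin_ext (\<lambda>w. delta [a * w!0, w!1]) g \<in> tens_rel sm 2"
  proof (cases rule: gens2E)
    case (1 b x y) then show ?thesis using gen_add0[of "a*x" "a*y" "b" sm] by (simp add: lin_ext_gen1 distrib_left)
  next
    case (2 b x y) then show ?thesis using gen_add1[of "a*b" x y sm] by (simp add: lin_ext_gen1)
  next
    case (3 b c x) then show ?thesis using gen_sc0[of sm c "a*x" b] by (simp add: lin_ext_gen2 sm_mult2)
  next
    case (4 b c x) then show ?thesis using gen_sc1[of "a*b" sm c x] by (simp add: lin_ext_gen2)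
  qed
qed

lemma Rop_rel: "f \<in> tens_rel sm 2 \<Longrightarrow> Rop a f \<in> tens_rel sm 2"
  unfolding Rop_def
proof (rule lin_ext_rel_pres)
  fix g assume "g \<in> tens_gens sm 2"
  then show "lin_ext (\<lambda>w. delta [w!0, w!1 * a]) g \<in> tens_rel sm 2"
  proof (cases rule: gens2E)
    case (1 b x y) then show ?thesis using gen_add0[of x y "b*a" sm] by (simp add: lin_ext_gen1)
  next
    case (2 b x y) then show ?thesis using gen_add1[of b "x*a" "y*a" sm] by (simp add: lin_ext_gen1 distrib_right)
  next
    case (3 b c x) then show ?thesis using gen_sc0[of sm c x "b*a"] by (simp add: lin_ext_gen2)
  next
    case (4 b c x) then show ?thesis using gen_sc1[of b sm c "x*a"] by (simp add: lin_ext_gen2 sm_mult1)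
  qed
qed

lemma Lop_V: "f \<in> V \<Longrightarrow> Lop a f \<in> V" unfolding Lop_def by (rule L_carrier)
lemma Rop_V: "f \<in> V \<Longrightarrow> Rop a f \<in> V" unfolding Rop_def by (rule R_carrier)

lemma Lop_teq: assumes "f \<in> V" "g \<in> V" "teq sm 2 f g" shows "teq sm 2 (Lop a f) (Lop a g)"
proof -
  have "(\<lambda>u. Lop a f u - Lop a g u) = Lop a (\<lambda>u. f u - g u)"
    unfolding Lop_def by (rule lin_ext_diff[symmetric]) (use assms carrier_fin in auto)
  then show ?thesis using Lop_rel assms(3) unfolding teq_def by metis
qed

lemma Rop_teq: assumes "f \<in> V" "g \<in> V" "teq sm 2 f g" shows "teq sm 2 (Rop a f) (Rop a g)"
proof -
  have "(\<lambda>u. Rop a f u - Rop a g u) = Rop a (\<lambda>u. f u - g u)"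
    unfolding Rop_def by (rule lin_ext_diff[symmetric]) (use assms carrier_fin in auto)
  then show ?thesis using Rop_rel assms(3) unfolding teq_def by metis
qed

lemma cls_eq: assumes "f \<in> V" "g \<in> V" shows "cls sm f = cls sm g \<longleftrightarrow> teq sm 2 f g"
proof
  assume "cls sm f = cls sm g"
  moreover have "f \<in> cls sm f" using assms(1) teq_refl unfolding cls_def by blast
  ultimately show "teq sm 2 f g" unfolding cls_def by blast
next
  assume t: "teq sm 2 f g"
  show "cls sm f = cls sm g"
    unfolding cls_def using t teq_trans teq_sym by blast
qed

lemma rep_cls: assumes "f \<in> V" shows "rep (cls sm f) \<in> V" "teq sm 2 (rep (cls sm f)) f"
proof -
  have "f \<in> cls sm f" using assms teq_refl unfolding cls_def by blast
  then have "rep (cls sm f) \<in> cls sm f" unfolding rep_def by (rule someI[of "\<lambda>g. g \<in> cls sm f" f])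
  then show "rep (cls sm f) \<in> V" "teq sm 2 (rep (cls sm f)) f" unfolding cls_def by auto
qed

lemma add_cls: assumes "f \<in> V" "g \<in> V"
  shows "badd (QM sm) (cls sm f) (cls sm g) = cls sm (\<lambda>u. f u + g u)"
  unfolding QM_def using rep_cls[OF assms(1)] rep_cls[OF assms(2)] assms
  by (simp add: cls_eq carrier_add teq_add)

lemma lact_cls: assumes "f \<in> V" shows "blact (QM sm) a (cls sm f) = cls sm (Lop a f)"
  unfolding QM_def using rep_cls[OF assms(1)] assms
  by (simp add: cls_eq Lop_V Lop_teq)

lemma ract_cls: assumes "f \<in> V" shows "bract (QM sm) (cls sm f) a = cls sm (Rop a f)"
  unfolding QM_def using rep_cls[OF assms(1)] assms
  by (simp add: cls_eq Rop_V Rop_teq)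

lemma carrier_QM: "bcarrier (QM sm) = cls sm ` V" by (simp add: QM_def)
lemma zero_QM: "bzero (QM sm) = cls sm (\<lambda>u. 0)" by (simp add: QM_def)

end

lemma lin_ext_Gadd: "(\<lambda>u. lin_ext G f u + lin_ext H f u) = lin_ext (\<lambda>w u. G w u + H w u) f"
  unfolding lin_ext_def by (rule ext) (simp add: distrib_left sum.distrib)

lemma carrier_neg: "f \<in> tens_carrier n \<Longrightarrow> (\<lambda>u. - f u) \<in> tens_carrier n"
  using carrier_scale[of f n "-1"] by simp

lemma lin_ext_len2_cong: assumes "f \<in> tens_carrier 2" "\<And>p q. G [p, q] = H [p, q]"
  shows "lin_ext G f = lin_ext H f"
proof (rule lin_ext_cong)
  fix w assume "f w \<noteq> 0"
  then have "length w = 2" using carrier_len[OF assms(1)] by blast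
  then obtain p q where "w = [p, q]" by (rule len2E)
  then show "G w = H w" using assms(2) by simp
qed

context qm
begin

lemma Lop_add: "f \<in> V \<Longrightarrow> g \<in> V \<Longrightarrow> Lop a (\<lambda>u. f u + g u) = (\<lambda>u. Lop a f u + Lop a g u)"
  unfolding Lop_def by (rule lin_ext_add) (auto dest: carrier_fin)

lemma Rop_add: "f \<in> V \<Longrightarrow> g \<in> V \<Longrightarrow> Rop a (\<lambda>u. f u + g u) = (\<lambda>u. Rop a f u + Rop a g u)"
  unfolding Rop_def by (rule lin_ext_add) (auto dest: carrier_fin)

lemma Lop_Lop: "f \<in> V \<Longrightarrow> Lop a (Lop b f) = Lop (a * b) f"
  unfolding Lop_def
  by (subst lin_ext_comp) (auto dest: carrier_fin intro: fin_supp_delta simp: lin_ext_delta mult.assoc)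

lemma Rop_Rop: "f \<in> V \<Longrightarrow> Rop b (Rop a f) = Rop (a * b) f"
  unfolding Rop_def
  by (subst lin_ext_comp) (auto dest: carrier_fin intro: fin_supp_delta simp: lin_ext_delta mult.assoc)

lemma Rop_Lop: "f \<in> V \<Longrightarrow> Rop b (Lop a f) = Lop a (Rop b f)"
  unfolding Rop_def Lop_def
  by (subst (1 2) lin_ext_comp) (auto dest: carrier_fin intro: fin_supp_delta simp: lin_ext_delta)

lemma Lop_one: "f \<in> V \<Longrightarrow> Lop 1 f = f"
proof -
  assume f: "f \<in> V"
  have "Lop 1 f = lin_ext delta f" unfolding Lop_def by (rule lin_ext_len2_cong[OF f]) simp
  then show ?thesis using lin_ext_id carrier_fin[OF f] by simp
qed

lemma Rop_one: "f \<in> V \<Longrightarrow> Rop 1 f = f"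
proof -
  assume f: "f \<in> V"
  have "Rop 1 f = lin_ext delta f" unfolding Rop_def by (rule lin_ext_len2_cong[OF f]) simp
  then show ?thesis using lin_ext_id carrier_fin[OF f] by simp
qed

lemma Lop_plus: assumes f: "f \<in> V" shows "teq sm 2 (Lop (a + b) f) (\<lambda>u. Lop a f u + Lop b f u)"
  unfolding Lop_def lin_ext_Gadd
proof (rule lin_ext_teq)
  show "finite {w. f w \<noteq> 0}" using carrier_fin[OF f] .
  fix w
  have e: "(\<lambda>u. delta [(a + b) * w!0, w!1] u - (delta [a * w!0, w!1] u + delta [b * w!0, w!1] u))
      = (\<lambda>u. delta [a * w!0 + b * w!0, w!1] u - delta [a * w!0, w!1] u - delta [b * w!0, w!1] u)"
    by (rule ext) (simp add: distrib_right)
  show "teq sm 2 (delta [(a + b) * w!0, w!1]) (\<lambda>u. delta [a * w!0, w!1] u + delta [b * w!0, w!1] u)"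
    unfolding teq_def e by (rule gen_add0)
qed

lemma Rop_plus: assumes f: "f \<in> V" shows "teq sm 2 (Rop (a + b) f) (\<lambda>u. Rop a f u + Rop b f u)"
  unfolding Rop_def lin_ext_Gadd
proof (rule lin_ext_teq)
  show "finite {w. f w \<noteq> 0}" using carrier_fin[OF f] .
  fix w
  have e: "(\<lambda>u. delta [w!0, w!1 * (a + b)] u - (delta [w!0, w!1 * a] u + delta [w!0, w!1 * b] u))
      = (\<lambda>u. delta [w!0, w!1 * a + w!1 * b] u - delta [w!0, w!1 * a] u - delta [w!0, w!1 * b] u)"
    by (rule ext) (simp add: distrib_left)
  show "teq sm 2 (delta [w!0, w!1 * (a + b)]) (\<lambda>u. delta [w!0, w!1 * a] u + delta [w!0, w!1 * b] u)"
    unfolding teq_def e by (rule gen_add1)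
qed

lemma delta_sc0: "teq sm 2 (delta [sm c x, y]) (\<lambda>u. c * delta [x, y] u)"
  unfolding teq_def by (rule gen_sc0)

lemma delta_sc1: "teq sm 2 (delta [x, sm c y]) (\<lambda>u. c * delta [x, y] u)"
  unfolding teq_def by (rule gen_sc1)

lemma Lop_sm: assumes f: "f \<in> V" shows "teq sm 2 (Lop (sm c 1) f) (Rop (sm c 1) f)"
  unfolding Lop_def Rop_def
proof (rule lin_ext_teq)
  show "finite {w. f w \<noteq> 0}" using carrier_fin[OF f] .
  fix w
  have e1: "sm c 1 * w!0 = sm c (w!0)" using sm_mult1[of c 1 "w!0"] by simp
  have e2: "w!1 * sm c 1 = sm c (w!1)" using sm_mult2[of c "w!1" 1] by simp
  show "teq sm 2 (delta [sm c 1 * w!0, w!1]) (delta [w!0, w!1 * sm c 1])"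
    unfolding e1 e2 by (rule teq_trans[OF delta_sc0 teq_sym[OF delta_sc1]])
qed

lemma Lop_scale: assumes f: "f \<in> V" shows "teq sm 2 (Lop (sm c 1) f) (\<lambda>u. c * f u)"
proof -
  have "(\<lambda>u. c * f u) = (\<lambda>u. c * lin_ext delta f u)" using lin_ext_id[OF carrier_fin[OF f]] by simp
  also have "\<dots> = lin_ext (\<lambda>w u. c * delta w u) f" by (rule lin_ext_Gscale)
  also have "\<dots> = lin_ext (\<lambda>w u. c * delta [w!0, w!1] u) f" by (rule lin_ext_len2_cong[OF f]) simp
  finally have e: "(\<lambda>u. c * f u) = lin_ext (\<lambda>w u. c * delta [w!0, w!1] u) f" .
  show ?thesis unfolding e Lop_def
  proof (rule lin_ext_teq)
    show "finite {w. f w \<noteq> 0}" using carrier_fin[OF f] .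
    fix w
    have e1: "sm c 1 * w!0 = sm c (w!0)" using sm_mult1[of c 1 "w!0"] by simp
    show "teq sm 2 (delta [sm c 1 * w!0, w!1]) (\<lambda>u. c * delta [w!0, w!1] u)"
      unfolding e1 by (rule delta_sc0)
  qed
qed

lemmas QS = carrier_QM zero_QM add_cls lact_cls ract_cls carrier_add carrier_zero Lop_V Rop_V

lemma QM_bimod: "bimodule sm (QM sm)"
  unfolding bimodule_def Let_def
proof (intro conjI)
  show "bzero (QM sm) \<in> bcarrier (QM sm)" by (simp add: QS)
  show "\<forall>x\<in>bcarrier (QM sm). \<forall>y\<in>bcarrier (QM sm). badd (QM sm) x y \<in> bcarrier (QM sm)"
    by (auto simp: QS)
  show "\<forall>x\<in>bcarrier (QM sm). \<forall>y\<in>bcarrier (QM sm). \<forall>w\<in>bcarrier (QM sm).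
          badd (QM sm) (badd (QM sm) x y) w = badd (QM sm) x (badd (QM sm) y w)"
    by (auto simp: QS add.assoc)
  show "\<forall>x\<in>bcarrier (QM sm). \<forall>y\<in>bcarrier (QM sm). badd (QM sm) x y = badd (QM sm) y x"
    by (auto simp: QS add.commute)
  show "\<forall>x\<in>bcarrier (QM sm). badd (QM sm) (bzero (QM sm)) x = x"
    by (auto simp: QS)
  show "\<forall>x\<in>bcarrier (QM sm). \<exists>y\<in>bcarrier (QM sm). badd (QM sm) x y = bzero (QM sm)"
  proof
    fix X assume "X \<in> bcarrier (QM sm)"
    then obtain f where f: "f \<in> V" "X = cls sm f" by (auto simp: QS)
    show "\<exists>y\<in>bcarrier (QM sm). badd (QM sm) X y = bzero (QM sm)"
      by (rule bexI[of _ "cls sm (\<lambda>u. - f u)"]) (use f carrier_neg[OF f(1)] in \<open>auto simp: QS\<close>)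
  qed
  show "\<forall>a. \<forall>x\<in>bcarrier (QM sm). blact (QM sm) a x \<in> bcarrier (QM sm) \<and> bract (QM sm) x a \<in> bcarrier (QM sm)"
    by (auto simp: QS)
  show "\<forall>a. \<forall>x\<in>bcarrier (QM sm). \<forall>y\<in>bcarrier (QM sm).
          blact (QM sm) a (badd (QM sm) x y) = badd (QM sm) (blact (QM sm) a x) (blact (QM sm) a y) \<and>
          bract (QM sm) (badd (QM sm) x y) a = badd (QM sm) (bract (QM sm) x a) (bract (QM sm) y a)"
    by (auto simp: QS Lop_add Rop_add)
  show "\<forall>a b. \<forall>x\<in>bcarrier (QM sm).
          blact (QM sm) (a + b) x = badd (QM sm) (blact (QM sm) a x) (blact (QM sm) b x) \<and>
          bract (QM sm) x (a + b) = badd (QM sm) (bract (QM sm) x a) (bract (QM sm) x b)"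
    by (auto simp: QS cls_eq Lop_plus Rop_plus)
  show "\<forall>a b. \<forall>x\<in>bcarrier (QM sm).
          blact (QM sm) a (blact (QM sm) b x) = blact (QM sm) (a * b) x \<and>
          bract (QM sm) (bract (QM sm) x a) b = bract (QM sm) x (a * b)"
    by (auto simp: QS Lop_Lop Rop_Rop)
  show "\<forall>a b. \<forall>x\<in>bcarrier (QM sm). bract (QM sm) (blact (QM sm) a x) b = blact (QM sm) a (bract (QM sm) x b)"
    by (auto simp: QS Rop_Lop)
  show "\<forall>x\<in>bcarrier (QM sm). blact (QM sm) 1 x = x \<and> bract (QM sm) x 1 = x"
    by (auto simp: QS Lop_one Rop_one)
  show "\<forall>c. \<forall>x\<in>bcarrier (QM sm). blact (QM sm) (sm c 1) x = bract (QM sm) x (sm c 1)"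
    by (auto simp: QS cls_eq Lop_sm)
qed

end

lemma dir1:
  fixes sm :: "'k::field \<Rightarrow> 'a::ring_1 \<Rightarrow> 'a"
  assumes ka: "kalgebra sm" and P: "projective_regular sm TYPE(('a list \<Rightarrow> 'k) set) TYPE('a)"
  shows "\<exists>D. normalized_nearly_frobenius sm D"
proof -
  interpret Q: qm sm by (rule qm.intro[OF ka])
  interpret R1: bmx sm "regular_bimod :: ('a, 'a) bimod" 1
    by (rule bmx.intro[OF bmod.intro[OF ka reg_bimod[OF ka]]]) (rule bmx_axioms.intro, simp add: regular_bimod_def)
  let ?V = "tens_carrier 2 :: ('a list \<Rightarrow> 'k) set"
  define g where "g X = mult_tens sm (rep X)" for X :: "('a list \<Rightarrow> 'k) set"
  have mtP: "mult_tens sm f = R1.\<Phi> f" if "f \<in> ?V" for f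
    using mult_tens_Phi[OF ka carrier_fin[OF that]] by simp
  have g_cls: "g (cls sm f) = mult_tens sm f" if "f \<in> ?V" for f
    unfolding g_def using mtP[OF that] mtP[OF Q.rep_cls(1)[OF that]] Q.rep_cls[OF that] R1.Phi_teq[OF Q.rep_cls(1)[OF that] that] by simp
  have mt_add: "mult_tens sm (\<lambda>u. f u + f' u) = mult_tens sm f + mult_tens sm f'" if "f \<in> ?V" "f' \<in> ?V" for f f'
    using mtP[OF carrier_add[OF that]] mtP[OF that(1)] mtP[OF that(2)] R1.Phi_add[OF carrier_fin[OF that(1)] carrier_fin[OF that(2)]]
    by (simp add: regular_bimod_def)
  have mt_L: "mult_tens sm (Lop a f) = a * mult_tens sm f" if "f \<in> ?V" for a f
    using mtP[OF Q.Lop_V[OF that]] mtP[OF that] R1.Phi_L[OF carrier_fin[OF that], of a]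
    by (simp add: regular_bimod_def Lop_def)
  have mt_R: "mult_tens sm (Rop b f) = mult_tens sm f * b" if "f \<in> ?V" for b f
    using mtP[OF Q.Rop_V[OF that]] mtP[OF that] R1.Phi_R[OF carrier_fin[OF that], of b]
    by (simp add: regular_bimod_def Rop_def)
  have mt_delta: "mult_tens sm (delta [a, b]) = a * b" for a b
    using mtP[OF delta2_carrier[of a b]] R1.Phi_delta[of "[a, b]"]
    by (simp add: regular_bimod_def TT_def)
  have ghom: "bimod_hom (QM sm) regular_bimod g"
    unfolding bimod_hom_def
  proof (intro conjI ballI allI)
    fix X assume "X \<in> bcarrier (QM sm)"
    then show "g X \<in> bcarrier regular_bimod" by (simp add: regular_bimod_def)
  next
    fix X Y assume "X \<in> bcarrier (QM sm)" "Y \<in> bcarrier (QM sm)"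
    then obtain f f' where f: "f \<in> ?V" "X = cls sm f" "f' \<in> ?V" "Y = cls sm f'" by (auto simp: Q.carrier_QM)
    show "g (badd (QM sm) X Y) = badd regular_bimod (g X) (g Y)"
      using f by (simp add: Q.add_cls g_cls carrier_add mt_add regular_bimod_def)
  next
    fix a X assume "X \<in> bcarrier (QM sm)"
    then obtain f where f: "f \<in> ?V" "X = cls sm f" by (auto simp: Q.carrier_QM)
    show "g (blact (QM sm) a X) = blact regular_bimod a (g X)"
      using f by (simp add: Q.lact_cls g_cls Q.Lop_V mt_L regular_bimod_def)
  next
    fix a X assume "X \<in> bcarrier (QM sm)"
    then obtain f where f: "f \<in> ?V" "X = cls sm f" by (auto simp: Q.carrier_QM)
    show "g (bract (QM sm) X a) = bract regular_bimod (g X) a"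
      using f by (simp add: Q.ract_cls g_cls Q.Rop_V mt_R regular_bimod_def)
  qed
  have gsurj: "g ` bcarrier (QM sm) = bcarrier regular_bimod"
  proof -
    have "a \<in> g ` bcarrier (QM sm)" for a
    proof
      show "cls sm (delta [a, 1]) \<in> bcarrier (QM sm)" unfolding Q.carrier_QM by (rule imageI[OF delta2_carrier])
      show "a = g (cls sm (delta [a, 1]))" using g_cls[OF delta2_carrier] mt_delta by simp
    qed
    then show ?thesis by (auto simp: regular_bimod_def)
  qed
  have idhom: "bimod_hom regular_bimod regular_bimod (\<lambda>a. a)"
    by (simp add: bimod_hom_def regular_bimod_def)
  have "\<exists>h. bimod_hom regular_bimod (QM sm) h \<and> (\<forall>a. g (h a) = a)"
    by (rule P[unfolded projective_regular_def, rule_format, of "QM sm" regular_bimod g "\<lambda>a. a"])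
      (intro conjI Q.QM_bimod reg_bimod[OF ka] ghom gsurj idhom)
  then obtain h where hh: "bimod_hom regular_bimod (QM sm) h" and gh: "\<And>a. g (h a) = a"
    by blast
  have hC: "h a \<in> bcarrier (QM sm)" for a using hh unfolding bimod_hom_def by (simp add: regular_bimod_def)
  have H2: "\<forall>x\<in>UNIV. \<forall>y\<in>UNIV. h (x + y) = badd (QM sm) (h x) (h y)"
    using hh[unfolded bimod_hom_def, THEN conjunct2, THEN conjunct1] unfolding regular_bimod_def bimod.select_convs .
  have H3: "\<forall>a. \<forall>x\<in>UNIV. h (a * x) = blact (QM sm) a (h x) \<and> h (x * a) = bract (QM sm) (h x) a"
    using hh[unfolded bimod_hom_def, THEN conjunct2, THEN conjunct2] unfolding regular_bimod_def bimod.select_convs .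
  have hadd: "h (a + b) = badd (QM sm) (h a) (h b)" for a b
    using bspec[OF bspec[OF H2 UNIV_I[of a]] UNIV_I[of b]] .
  have hl: "h (a * b) = blact (QM sm) a (h b)" for a b
    using bspec[OF spec[OF H3, of a] UNIV_I[of b]] by (rule conjunct1)
  have hr: "h (a * b) = bract (QM sm) (h a) b" for a b
    using bspec[OF spec[OF H3, of b] UNIV_I[of a]] by (rule conjunct2)
  define D where "D a = rep (h a)" for a
  have DV: "D a \<in> ?V" and hD: "h a = cls sm (D a)" for a
  proof -
    obtain phi where phi: "phi \<in> ?V" "h a = cls sm phi" using hC[of a] by (auto simp: Q.carrier_QM)
    show "D a \<in> ?V" unfolding D_def using phi Q.rep_cls(1) by simp
    show "h a = cls sm (D a)" unfolding D_def using phi Q.rep_cls[OF phi(1)] Q.cls_eq teq_sym by simp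
  qed
  have K1: "teq sm 2 (D (a + b)) (\<lambda>u. D a u + D b u)" for a b
  proof -
    have "cls sm (D (a + b)) = cls sm (\<lambda>u. D a u + D b u)"
      using hadd[of a b] hD Q.add_cls[OF DV DV] by simp
    then show ?thesis using Q.cls_eq[OF DV carrier_add[OF DV DV]] by simp
  qed
  have K2: "teq sm 2 (D (sm c a)) (\<lambda>u. c * D a u)" for c a
  proof -
    have "sm c a = sm c 1 * a" using Q.sm_mult1[of c 1 a] by simp
    then have "cls sm (D (sm c a)) = cls sm (Lop (sm c 1) (D a))"
      using hl[of "sm c 1" a] hD Q.lact_cls[OF DV] by simp
    then have "teq sm 2 (D (sm c a)) (Lop (sm c 1) (D a))" using Q.cls_eq[OF DV Q.Lop_V[OF DV]] by simp
    then show ?thesis using Q.Lop_scale[OF DV] teq_trans by blast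
  qed
  have TL: "teq sm 2 (D (a * b)) (Lop a (D b))" for a b
  proof -
    have "cls sm (D (a * b)) = cls sm (Lop a (D b))" using hl[of a b] hD Q.lact_cls[OF DV] by simp
    then show ?thesis using Q.cls_eq[OF DV Q.Lop_V[OF DV]] by simp
  qed
  have TR: "teq sm 2 (D (a * b)) (Rop b (D a))" for a b
  proof -
    have "cls sm (D (a * b)) = cls sm (Rop b (D a))" using hr[of a b] hD Q.ract_cls[OF DV] by simp
    then show ?thesis using Q.cls_eq[OF DV Q.Rop_V[OF DV]] by simp
  qed
  have NF1: "teq sm 2 (lin_ext (\<lambda>w. D (w ! 0 * w ! 1)) f) (id_m (lin_ext (\<lambda>w. rtens (D (w ! 0)) (w ! 1)) f))"
    if f: "f \<in> ?V" for f
  proof -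
    have finr: "finite {u. rtens (D (w!0)) (w!1) u \<noteq> 0}" for w
      unfolding supp_rtens using carrier_fin[OF DV] by simp
    have "id_m (lin_ext (\<lambda>w. rtens (D (w ! 0)) (w ! 1)) f) = lin_ext (\<lambda>w. id_m (rtens (D (w ! 0)) (w ! 1))) f"
      unfolding id_m_def by (rule lin_ext_comp) (use carrier_fin[OF f] finr in auto)
    also have "\<dots> = lin_ext (\<lambda>w. Rop (w!1) (D (w!0))) f"
      by (rule lin_ext_cong) (simp add: id_m_rtens[OF DV] Rop_def)
    finally have e: "id_m (lin_ext (\<lambda>w. rtens (D (w ! 0)) (w ! 1)) f) = lin_ext (\<lambda>w. Rop (w!1) (D (w!0))) f" .
    show ?thesis unfolding e by (rule lin_ext_teq) (use carrier_fin[OF f] TR in auto)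
  qed
  have NF2: "teq sm 2 (lin_ext (\<lambda>w. D (w ! 0 * w ! 1)) f) (m_id (lin_ext (\<lambda>w. ltens (w ! 0) (D (w ! 1))) f))"
    if f: "f \<in> ?V" for f
  proof -
    have finl: "finite {u. ltens (w!0) (D (w!1)) u \<noteq> 0}" for w
      unfolding supp_ltens using carrier_fin[OF DV] by simp
    have "m_id (lin_ext (\<lambda>w. ltens (w ! 0) (D (w ! 1))) f) = lin_ext (\<lambda>w. m_id (ltens (w ! 0) (D (w ! 1)))) f"
      unfolding m_id_def by (rule lin_ext_comp) (use carrier_fin[OF f] finl in auto)
    also have "\<dots> = lin_ext (\<lambda>w. Lop (w!0) (D (w!1))) f"
      by (rule lin_ext_cong) (simp add: m_id_ltens Lop_def)
    finally have e: "m_id (lin_ext (\<lambda>w. ltens (w ! 0) (D (w ! 1))) f) = lin_ext (\<lambda>w. Lop (w!0) (D (w!1))) f" .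
    show ?thesis unfolding e by (rule lin_ext_teq) (use carrier_fin[OF f] TL in auto)
  qed
  have "normalized_nearly_frobenius sm D"
    unfolding normalized_nearly_frobenius_def nearly_frobenius_def kLinear_coproduct_def
  proof (intro conjI allI ballI)
    fix a show "D a \<in> tens_carrier 2" by (rule DV)
  next
    fix a b show "teq sm 2 (D (a + b)) (\<lambda>u. D a u + D b u)" by (rule K1)
  next
    fix c a show "teq sm 2 (D (sm c a)) (\<lambda>u. c * D a u)" by (rule K2)
  next
    fix f :: "'a list \<Rightarrow> 'k" assume "f \<in> tens_carrier 2"
    then show "teq sm 2 (lin_ext (\<lambda>w. D (w ! 0 * w ! 1)) f) (id_m (lin_ext (\<lambda>w. rtens (D (w ! 0)) (w ! 1)) f))"
      by (rule NF1)
  next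
    fix f :: "'a list \<Rightarrow> 'k" assume "f \<in> tens_carrier 2"
    then show "teq sm 2 (lin_ext (\<lambda>w. D (w ! 0 * w ! 1)) f) (m_id (lin_ext (\<lambda>w. ltens (w ! 0) (D (w ! 1))) f))"
      by (rule NF2)
  next
    fix a show "mult_tens sm (D a) = a" using gh[of a] by (simp add: g_def D_def)
  qed
  then show ?thesis by blast
qed

theorem theorem34:
  fixes sm :: "'k::field \<Rightarrow> 'a::ring_1 \<Rightarrow> 'a"
  assumes "kalgebra sm"
  shows "(projective_regular sm TYPE(('a list \<Rightarrow> 'k) set) TYPE('a)
            \<longleftrightarrow> (\<exists>D. normalized_nearly_frobenius sm D))
       \<and> ((\<exists>D. normalized_nearly_frobenius sm D) \<longrightarrow> projective_regular sm TYPE('m) TYPE('n))"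
proof (intro conjI iffI impI)
  assume "projective_regular sm TYPE(('a list \<Rightarrow> 'k) set) TYPE('a)"
  then show "\<exists>D. normalized_nearly_frobenius sm D" by (rule dir1[OF assms])
next
  assume "\<exists>D. normalized_nearly_frobenius sm D"
  then obtain D where "normalized_nearly_frobenius sm D" by blast
  then show "projective_regular sm TYPE(('a list \<Rightarrow> 'k) set) TYPE('a)" by (rule dir2[OF assms])
next
  assume "\<exists>D. normalized_nearly_frobenius sm D"
  then obtain D where "normalized_nearly_frobenius sm D" by blast
  then show "projective_regular sm TYPE('m) TYPE('n)" by (rule dir2[OF assms])
qed

end
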